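(* Let $H=T\cup C_n$ be a Halin graph whose outer cycle $C_n$ has odd length $n$, and suppose $H$ is not a wheel. Then $AT(H)=3$.
   Context: All graphs are finite and simple. A Halin graph $H=T\cup C_n$ is a plane graph obtained from a plane tree $T$ having no vertex of degree two and at least one vertex of degree at least three, by adding a cycle $C_n$ (the outer cycle) that connects all the leaves of $T$ in the cyclic order determined by the planar drawing of $T$. The vertices not on $C_n$ are inner vertices; a wheel is a Halin graph with exactly one inner vertex. For a digraph $D$, an Eulerian subdigraph is a spanning subdigraph (a subset of the arcs, possibly empty) in which every vertex has indegree equal to outdegree; it is even or odd according to the parity of its number of arcs. The Alon–Tarsi number $AT(G)$ is the smallest integer $k$ such that $G$ has an orientation $D$ with maximum outdegree at most $k-1$ for which the numbers of even and odd Eulerian subdigraphs of $D$ differ. *)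

theory Defs
  imports Main
begin

definition simple_graph :: "'a set \<Rightarrow> 'a set set \<Rightarrow> bool" where
  "simple_graph V E \<longleftrightarrow> finite V \<and>
     (\<forall>e\<in>E. \<exists>u v. e = {u, v} \<and> u \<noteq> v \<and> u \<in> V \<and> v \<in> V)"

definition nbrs :: "'a set set \<Rightarrow> 'a \<Rightarrow> 'a set" where
  "nbrs E v = {u. {u, v} \<in> E}"

definition deg :: "'a set set \<Rightarrow> 'a \<Rightarrow> nat" where
  "deg E v = card (nbrs E v)"

definition graph_connected :: "'a set \<Rightarrow> 'a set set \<Rightarrow> bool" where
  "graph_connected V E \<longleftrightarrow>
     (\<forall>u\<in>V. \<forall>v\<in>V. (u, v) \<in> {(x, y). {x, y} \<in> E}\<^sup>*)"

definition is_tree :: "'a set \<Rightarrow> 'a set set \<Rightarrow> bool" where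
  "is_tree V E \<longleftrightarrow> simple_graph V E \<and> V \<noteq> {} \<and> graph_connected V E \<and>
     card E = card V - 1"

definition leaves :: "'a set \<Rightarrow> 'a set set \<Rightarrow> 'a set" where
  "leaves V E = {v \<in> V. deg E v = 1}"

text \<open>A rotation system assigns to each vertex v a cyclic permutation rot v of its
  neighbourhood (every rotation system of a tree is a plane embedding, and every plane
  embedding arises this way).\<close>
definition rotation_system :: "'a set \<Rightarrow> 'a set set \<Rightarrow> ('a \<Rightarrow> 'a \<Rightarrow> 'a) \<Rightarrow> bool" where
  "rotation_system V E rot \<longleftrightarrow>
     (\<forall>v\<in>V. bij_betw (rot v) (nbrs E v) (nbrs E v) \<and>
        (\<forall>u\<in>nbrs E v. \<forall>w\<in>nbrs E v. \<exists>k. (rot v ^^ k) u = w))"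

text \<open>Face-tracing step on darts: after traversing dart (u,v), continue with (v, rot v u).\<close>
definition face_step :: "('a \<Rightarrow> 'a \<Rightarrow> 'a) \<Rightarrow> 'a \<times> 'a \<Rightarrow> 'a \<times> 'a" where
  "face_step rot d = (snd d, rot (snd d) (fst d))"

text \<open>The leaf following leaf l (entered via dart (p,l)) along the boundary walk is l'.\<close>
definition next_leaf :: "'a set \<Rightarrow> 'a set set \<Rightarrow> ('a \<Rightarrow> 'a \<Rightarrow> 'a) \<Rightarrow> 'a \<Rightarrow> 'a \<Rightarrow> bool" where
  "next_leaf V E rot l l' \<longleftrightarrow>
     (\<exists>p. {p, l} \<in> E \<and>
        (\<exists>k>0. snd ((face_step rot ^^ k) (p, l)) = l' \<and>
           (\<forall>j. 0 < j \<and> j < k \<longrightarrow> snd ((face_step rot ^^ j) (p, l)) \<notin> leaves V E)))"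

definition cycle_edges :: "(nat \<Rightarrow> 'a) \<Rightarrow> nat \<Rightarrow> 'a set set" where
  "cycle_edges c n = {{c i, c (Suc i mod n)} | i. i < n}"

text \<open>Halin graph T \<union> C_n: T = (V, ET) a tree without degree-2 vertices and with a vertex of
  degree at least 3; c enumerates the leaves of T in the cyclic order determined by some
  plane drawing (rotation system) of T; H has edges ET \<union> cycle_edges c n.\<close>
definition is_halin :: "'a set \<Rightarrow> 'a set set \<Rightarrow> (nat \<Rightarrow> 'a) \<Rightarrow> nat \<Rightarrow> bool" where
  "is_halin V ET c n \<longleftrightarrow>
     is_tree V ET \<and> (\<forall>v\<in>V. deg ET v \<noteq> 2) \<and> (\<exists>v\<in>V. 3 \<le> deg ET v) \<and>
     bij_betw c {..<n} (leaves V ET) \<and>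
     (\<exists>rot. rotation_system V ET rot \<and>
        (\<forall>i<n. next_leaf V ET rot (c i) (c (Suc i mod n))))"

definition inner_vertices :: "'a set \<Rightarrow> 'a set set \<Rightarrow> 'a set" where
  "inner_vertices V ET = V - leaves V ET"

definition is_wheel_halin :: "'a set \<Rightarrow> 'a set set \<Rightarrow> bool" where
  "is_wheel_halin V ET \<longleftrightarrow> card (inner_vertices V ET) = 1"

definition orientation :: "'a set \<Rightarrow> 'a set set \<Rightarrow> ('a \<times> 'a) set \<Rightarrow> bool" where
  "orientation V E D \<longleftrightarrow>
     (\<forall>(u, v)\<in>D. {u, v} \<in> E) \<and>
     (\<forall>u v. {u, v} \<in> E \<longrightarrow> ((u, v) \<in> D \<longleftrightarrow> (v, u) \<notin> D))"

definition outdeg :: "('a \<times> 'a) set \<Rightarrow> 'a \<Rightarrow> nat" where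
  "outdeg D v = card {w. (v, w) \<in> D}"

definition indeg :: "('a \<times> 'a) set \<Rightarrow> 'a \<Rightarrow> nat" where
  "indeg D v = card {w. (w, v) \<in> D}"

definition eulerian_sub :: "('a \<times> 'a) set \<Rightarrow> ('a \<times> 'a) set \<Rightarrow> bool" where
  "eulerian_sub D A \<longleftrightarrow> A \<subseteq> D \<and> (\<forall>v. indeg A v = outdeg A v)"

definition num_even_eulerian :: "('a \<times> 'a) set \<Rightarrow> nat" where
  "num_even_eulerian D = card {A. eulerian_sub D A \<and> even (card A)}"

definition num_odd_eulerian :: "('a \<times> 'a) set \<Rightarrow> nat" where
  "num_odd_eulerian D = card {A. eulerian_sub D A \<and> odd (card A)}"

definition AT :: "'a set \<Rightarrow> 'a set set \<Rightarrow> nat" where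
  "AT V E = (LEAST k. \<exists>D. orientation V E D \<and> (\<forall>v\<in>V. outdeg D v + 1 \<le> k) \<and>
                        num_even_eulerian D \<noteq> num_odd_eulerian D)"

end

theory Submission
  imports Defs Complex_Main
begin

lemma sum_fst_eq:
  fixes A :: "('a \<times> 'a) set" and g :: "'a \<Rightarrow> real"
  assumes "finite A"
  shows "(\<Sum>a\<in>A. g (fst a)) = (\<Sum>x\<in>fst ` A. g x * real (outdeg A x))"
proof -
  have "(\<Sum>a\<in>A. g (fst a)) = (\<Sum>x\<in>fst ` A. \<Sum>a\<in>{a\<in>A. fst a = x}. g (fst a))"
    using assms by (rule sum.image_gen)
  also have "\<dots> = (\<Sum>x\<in>fst ` A. g x * real (outdeg A x))"
  proof (rule sum.cong[OF refl])
    fix x assume "x \<in> fst ` A"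
    have "(\<Sum>a\<in>{a\<in>A. fst a = x}. g (fst a)) = (\<Sum>a\<in>{a\<in>A. fst a = x}. g x)" by simp
    also have "\<dots> = g x * real (card {a\<in>A. fst a = x})" by simp
    also have "card {a\<in>A. fst a = x} = outdeg A x"
    proof -
      have "{a\<in>A. fst a = x} = Pair x ` {w. (x, w) \<in> A}" by force
      moreover have "inj_on (Pair x) {w. (x, w) \<in> A}" by (auto simp: inj_on_def)
      ultimately show ?thesis unfolding outdeg_def by (simp add: card_image)
    qed
    finally show "(\<Sum>a\<in>{a\<in>A. fst a = x}. g (fst a)) = g x * real (outdeg A x)" .
  qed
  finally show ?thesis .
qed

lemma sum_snd_eq:
  fixes A :: "('a \<times> 'a) set" and g :: "'a \<Rightarrow> real"
  assumes "finite A"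
  shows "(\<Sum>a\<in>A. g (snd a)) = (\<Sum>x\<in>snd ` A. g x * real (indeg A x))"
proof -
  have "(\<Sum>a\<in>A. g (snd a)) = (\<Sum>x\<in>snd ` A. \<Sum>a\<in>{a\<in>A. snd a = x}. g (snd a))"
    using assms by (rule sum.image_gen)
  also have "\<dots> = (\<Sum>x\<in>snd ` A. g x * real (indeg A x))"
  proof (rule sum.cong[OF refl])
    fix x assume "x \<in> snd ` A"
    have "(\<Sum>a\<in>{a\<in>A. snd a = x}. g (snd a)) = (\<Sum>a\<in>{a\<in>A. snd a = x}. g x)" by simp
    also have "\<dots> = g x * real (card {a\<in>A. snd a = x})" by simp
    also have "card {a\<in>A. snd a = x} = indeg A x"
    proof -
      have "{a\<in>A. snd a = x} = (\<lambda>w. (w, x)) ` {w. (w, x) \<in> A}" by force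
      moreover have "inj_on (\<lambda>w. (w, x)) {w. (w, x) \<in> A}" by (auto simp: inj_on_def)
      ultimately show ?thesis unfolding indeg_def by (simp add: card_image)
    qed
    finally show "(\<Sum>a\<in>{a\<in>A. snd a = x}. g (snd a)) = g x * real (indeg A x)" .
  qed
  finally show ?thesis .
qed

lemma outdeg_zero_out: "x \<notin> fst ` A \<Longrightarrow> outdeg A x = 0"
proof -
  assume "x \<notin> fst ` A" hence "{w. (x, w) \<in> A} = {}" by force
  thus ?thesis unfolding outdeg_def by simp
qed
lemma indeg_zero_out: "x \<notin> snd ` A \<Longrightarrow> indeg A x = 0"
proof -
  assume "x \<notin> snd ` A" hence "{w. (w, x) \<in> A} = {}" by force
  thus ?thesis unfolding indeg_def by simp
qed

lemma potential:
  fixes A :: "('a \<times> 'a) set" and g :: "'a \<Rightarrow> real"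
  assumes fin: "finite A" and eul: "\<And>v. indeg A v = outdeg A v"
    and mono: "\<And>u v. (u, v) \<in> A \<Longrightarrow> g v \<le> g u"
  shows "\<And>u v. (u, v) \<in> A \<Longrightarrow> g u = g v"
proof -
  let ?X = "fst ` A \<union> snd ` A"
  have fX: "finite ?X" using fin by simp
  have "(\<Sum>a\<in>A. g (fst a)) = (\<Sum>x\<in>?X. g x * real (outdeg A x))"
  proof -
    have "(\<Sum>a\<in>A. g (fst a)) = (\<Sum>x\<in>fst ` A. g x * real (outdeg A x))" by (rule sum_fst_eq[OF fin])
    also have "\<dots> = (\<Sum>x\<in>?X. g x * real (outdeg A x))"
      by (rule sum.mono_neutral_left) (use fX in \<open>auto simp: outdeg_zero_out\<close>)
    finally show ?thesis .
  qed
  moreover have "(\<Sum>a\<in>A. g (snd a)) = (\<Sum>x\<in>?X. g x * real (indeg A x))"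
  proof -
    have "(\<Sum>a\<in>A. g (snd a)) = (\<Sum>x\<in>snd ` A. g x * real (indeg A x))" by (rule sum_snd_eq[OF fin])
    also have "\<dots> = (\<Sum>x\<in>?X. g x * real (indeg A x))"
      by (rule sum.mono_neutral_left) (use fX in \<open>auto simp: indeg_zero_out\<close>)
    finally show ?thesis .
  qed
  ultimately have "(\<Sum>a\<in>A. g (fst a)) = (\<Sum>a\<in>A. g (snd a))" using eul by simp
  hence "(\<Sum>a\<in>A. g (fst a) - g (snd a)) = 0" by (simp add: sum_subtractf)
  moreover have "\<forall>a\<in>A. 0 \<le> g (fst a) - g (snd a)" using mono by auto
  ultimately have z: "\<forall>a\<in>A. g (fst a) - g (snd a) = 0"
    using sum_nonneg_eq_0_iff[OF fin, of "\<lambda>a. g (fst a) - g (snd a)"] by simp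
  fix u v assume "(u, v) \<in> A"
  with z have "g (fst (u, v)) - g (snd (u, v)) = 0" by blast
  thus "g u = g v" by simp
qed

definition grel :: "'a set set \<Rightarrow> ('a \<times> 'a) set" where
  "grel E = {(x, y). {x, y} \<in> E}"

definition gdist :: "'a set set \<Rightarrow> 'a \<Rightarrow> 'a \<Rightarrow> nat" where
  "gdist E r v = (LEAST k. (r, v) \<in> grel E ^^ k)"

lemma grel_sym: "sym (grel E)"
  unfolding grel_def sym_def by (simp add: insert_commute)

lemma grel_rtrancl_sym: "(x, y) \<in> (grel E)\<^sup>* \<Longrightarrow> (y, x) \<in> (grel E)\<^sup>*"
  using sym_rtrancl[OF grel_sym] by (rule symD)

lemma conn_reach:
  assumes "graph_connected V E" "r \<in> V" "v \<in> V"
  shows "(r, v) \<in> grel E ^^ gdist E r v"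
proof -
  have "(r, v) \<in> (grel E)\<^sup>*" using assms unfolding graph_connected_def grel_def by simp
  then obtain k where "(r, v) \<in> grel E ^^ k" using rtrancl_power by metis
  thus ?thesis unfolding gdist_def by (rule LeastI)
qed

lemma simple_edge_in: "simple_graph V E \<Longrightarrow> {u, v} \<in> E \<Longrightarrow> u \<in> V \<and> v \<in> V \<and> u \<noteq> v"
proof -
  assume "simple_graph V E" "{u, v} \<in> E"
  then obtain a b where "{u, v} = {a, b}" "a \<noteq> b" "a \<in> V" "b \<in> V" unfolding simple_graph_def by blast
  thus ?thesis by (auto simp: doubleton_eq_iff)
qed

lemma dist_edge:
  assumes "simple_graph V E" "graph_connected V E" "r \<in> V" "{u, v} \<in> E"
  shows "gdist E r v \<le> gdist E r u + 1"
proof -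
  have "u \<in> V" using simple_edge_in[OF assms(1,4)] by simp
  hence "(r, u) \<in> grel E ^^ gdist E r u" by (rule conn_reach[OF assms(2,3)])
  moreover have "(u, v) \<in> grel E" using assms(4) unfolding grel_def by simp
  ultimately have "(r, v) \<in> grel E ^^ Suc (gdist E r u)" by (rule relpow_Suc_I)
  hence "gdist E r v \<le> Suc (gdist E r u)" unfolding gdist_def by (rule Least_le)
  thus ?thesis by simp
qed

lemma dist_zero_iff:
  assumes "graph_connected V E" "r \<in> V" "v \<in> V"
  shows "gdist E r v = 0 \<longleftrightarrow> v = r"
proof
  assume "gdist E r v = 0"
  with conn_reach[OF assms] show "v = r" by simp
next
  assume "v = r"
  hence "(r, v) \<in> grel E ^^ 0" by simp
  hence "gdist E r v \<le> 0" unfolding gdist_def by (rule Least_le)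
  thus "gdist E r v = 0" by simp
qed

lemma dist_parent:
  assumes "simple_graph V E" "graph_connected V E" "r \<in> V" "v \<in> V" "v \<noteq> r"
  shows "\<exists>u. {u, v} \<in> E \<and> gdist E r u + 1 = gdist E r v"
proof -
  have "gdist E r v \<noteq> 0" using dist_zero_iff[OF assms(2,3,4)] assms(5) by simp
  then obtain k where k: "gdist E r v = Suc k" by (cases "gdist E r v") auto
  have "(r, v) \<in> grel E ^^ Suc k" using conn_reach[OF assms(2,3,4)] k by simp
  then obtain u where ru: "(r, u) \<in> grel E ^^ k" and uv: "(u, v) \<in> grel E" by (rule relpow_Suc_E)
  have e: "{u, v} \<in> E" using uv unfolding grel_def by simp
  have "gdist E r u \<le> k" using ru unfolding gdist_def by (rule Least_le)
  moreover have "gdist E r v \<le> gdist E r u + 1" using dist_edge[OF assms(1,2,3) e] .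
  ultimately have "gdist E r u + 1 = gdist E r v" using k by simp
  with e show ?thesis by (intro exI[of _ u] conjI)
qed

lemma reroute:
  assumes "simple_graph V E" "graph_connected V E" "r \<in> W" "W \<subseteq> V"
    and par: "\<And>x. x \<in> W \<Longrightarrow> x \<noteq> r \<Longrightarrow> \<exists>q\<in>W. {q, x} \<in> E' \<and> gdist E r q < gdist E r x"
  shows "\<And>x. x \<in> W \<Longrightarrow> (r, x) \<in> (grel E')\<^sup>*"
proof -
  have "\<forall>x. x \<in> W \<longrightarrow> gdist E r x = d \<longrightarrow> (r, x) \<in> (grel E')\<^sup>*" for d
  proof (induction d rule: less_induct)
    case (less d)
    show ?case
    proof (intro allI impI)
      fix x assume x: "x \<in> W" "gdist E r x = d"
      show "(r, x) \<in> (grel E')\<^sup>*"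
      proof (cases "x = r")
        case True thus ?thesis by simp
      next
        case False
        then obtain q where q: "q \<in> W" "{q, x} \<in> E'" "gdist E r q < gdist E r x" using par[OF x(1)] by auto
        have "gdist E r q < d" using q x by simp
        hence "(r, q) \<in> (grel E')\<^sup>*" using less.IH q(1) by simp
        moreover have "(q, x) \<in> grel E'" using q unfolding grel_def by simp
        ultimately show ?thesis by (rule rtrancl_into_rtrancl)
      qed
    qed
  qed
  thus "\<And>x. x \<in> W \<Longrightarrow> (r, x) \<in> (grel E')\<^sup>*" by auto
qed

lemma connected_from_root:
  assumes "r \<in> W" "\<And>x. x \<in> W \<Longrightarrow> (r, x) \<in> (grel E')\<^sup>*"
  shows "graph_connected W E'"
proof -
  have "(u, v) \<in> (grel E')\<^sup>*" if "u \<in> W" "v \<in> W" for u v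
  proof -
    have "(u, r) \<in> (grel E')\<^sup>*" by (rule grel_rtrancl_sym[OF assms(2)[OF that(1)]])
    moreover have "(r, v) \<in> (grel E')\<^sup>*" using assms(2)[OF that(2)] .
    ultimately show ?thesis by (rule rtrancl_trans)
  qed
  thus ?thesis unfolding graph_connected_def grel_def by simp
qed

lemma simple_finite_E: "simple_graph V E \<Longrightarrow> finite E"
proof -
  assume s: "simple_graph V E"
  hence "E \<subseteq> Pow V" unfolding simple_graph_def by fastforce
  moreover have "finite V" using s unfolding simple_graph_def by blast
  ultimately show ?thesis using finite_subset by fastforce
qed

lemma conn_card:
  "simple_graph V E \<Longrightarrow> graph_connected V E \<Longrightarrow> V \<noteq> {} \<Longrightarrow> card V \<le> card E + 1"
proof (induction "card V" arbitrary: V E rule: less_induct)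
  case less
  have finV: "finite V" using less.prems unfolding simple_graph_def by blast
  obtain r where r: "r \<in> V" using less.prems by blast
  show ?case
  proof (cases "card V \<le> 1")
    case True thus ?thesis by simp
  next
    case False
    define M where "M = Max (gdist E r ` V)"
    have "M \<in> gdist E r ` V" unfolding M_def using finV r by (intro Max_in) auto
    then obtain x where x: "x \<in> V" "gdist E r x = M" by (auto simp del: M_def)
    have xmax: "\<And>y. y \<in> V \<Longrightarrow> gdist E r y \<le> gdist E r x" unfolding x(2) M_def using finV by simp
    have "x \<noteq> r"
    proof
      assume "x = r"
      hence "\<forall>y\<in>V. y = r" using xmax dist_zero_iff[OF less.prems(2) r] x by (metis le_zero_eq)
      hence "\<forall>a1\<in>V. \<forall>a2\<in>V. a1 = a2" by metis
      hence "card V \<le> 1" using card_le_Suc0_iff_eq[OF finV] by simp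
      with False show False by simp
    qed
    define V' where "V' = V - {x}"
    define E' where "E' = {e\<in>E. x \<notin> e}"
    have rV': "r \<in> V'" using r \<open>x \<noteq> r\<close> unfolding V'_def by blast
    have s': "simple_graph V' E'"
      using less.prems(1) finV unfolding simple_graph_def V'_def E'_def by fastforce
    have reach: "\<And>y. y \<in> V' \<Longrightarrow> (r, y) \<in> (grel E')\<^sup>*"
    proof (rule reroute[OF less.prems(1,2) rV'])
      show "V' \<subseteq> V" unfolding V'_def by blast
    next
      fix y assume y: "y \<in> V'" "y \<noteq> r"
      obtain q where q: "{q, y} \<in> E" "gdist E r q + 1 = gdist E r y"
        using dist_parent[OF less.prems(1,2) r _ y(2)] y unfolding V'_def by blast
      have "q \<in> V" using simple_edge_in[OF less.prems(1) q(1)] by blast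
      have "gdist E r y \<le> gdist E r x" using xmax y unfolding V'_def by blast
      hence "q \<noteq> x" using q(2) by auto
      moreover have "y \<noteq> x" using y unfolding V'_def by blast
      ultimately show "\<exists>q\<in>V'. {q, y} \<in> E' \<and> gdist E r q < gdist E r y"
        using q \<open>q \<in> V\<close> unfolding V'_def E'_def by auto
    qed
    have c': "graph_connected V' E'" by (rule connected_from_root[OF rV' reach])
    have cardV': "card V' < card V" unfolding V'_def by (rule card_Diff1_less[OF finV x(1)])
    have IH: "card V' \<le> card E' + 1" using less.hyps[OF cardV' s' c'] rV' by blast
    obtain q where q: "{q, x} \<in> E" using dist_parent[OF less.prems(1,2) r x(1) \<open>x \<noteq> r\<close>] by blast
    have finE: "finite E" using simple_finite_E[OF less.prems(1)] .
    have "E' \<subset> E" using q unfolding E'_def by blast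
    hence "card E' < card E" using finE by (simp add: psubset_card_mono)
    moreover have "card V = card V' + 1" unfolding V'_def using card_Suc_Diff1[OF finV x(1)] by simp
    ultimately show ?thesis using IH by simp
  qed
qed

lemma tree_simple: "is_tree V E \<Longrightarrow> simple_graph V E" unfolding is_tree_def by simp
lemma tree_conn: "is_tree V E \<Longrightarrow> graph_connected V E" unfolding is_tree_def by simp

lemma tree_edge_removal_false:
  assumes t: "is_tree V E" and r: "r \<in> V" and e: "e \<in> E"
    and par: "\<And>x. x \<in> V \<Longrightarrow> x \<noteq> r \<Longrightarrow> \<exists>q\<in>V. {q, x} \<in> E - {e} \<and> gdist E r q < gdist E r x"
  shows False
proof -
  have s: "simple_graph V E" and c: "graph_connected V E" using t unfolding is_tree_def by auto
  have reach: "\<And>x. x \<in> V \<Longrightarrow> (r, x) \<in> (grel (E - {e}))\<^sup>*"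
    by (rule reroute[OF s c r subset_refl par])
  have c': "graph_connected V (E - {e})" by (rule connected_from_root[OF r reach])
  have s': "simple_graph V (E - {e})" using s unfolding simple_graph_def by blast
  have "V \<noteq> {}" using r by auto
  hence "card V \<le> card (E - {e}) + 1" by (rule conn_card[OF s' c'])
  moreover have "card (E - {e}) = card E - 1" using e simple_finite_E[OF s] by simp
  moreover have "card E = card V - 1" using t unfolding is_tree_def by simp
  moreover have "card V \<ge> 1"
  proof -
    have "finite V" using s unfolding simple_graph_def by simp
    hence "card V > 0" using r card_gt_0_iff by auto
    thus ?thesis by simp
  qed
  moreover have "card E \<ge> 1"
  proof -
    have "card E > 0" using e simple_finite_E[OF s] card_gt_0_iff by auto
    thus ?thesis by simp
  qed
  ultimately show False by linarith
qed

lemma tree_no_tie: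
  assumes t: "is_tree V E" and r: "r \<in> V" and e: "{u, v} \<in> E"
  shows "gdist E r u \<noteq> gdist E r v"
proof
  assume eq: "gdist E r u = gdist E r v"
  have s: "simple_graph V E" and c: "graph_connected V E" using t unfolding is_tree_def by auto
  show False
  proof (rule tree_edge_removal_false[OF t r e])
    fix x assume x: "x \<in> V" "x \<noteq> r"
    obtain q where q: "{q, x} \<in> E" "gdist E r q + 1 = gdist E r x"
      using dist_parent[OF s c r x] by blast
    have qV: "q \<in> V" using simple_edge_in[OF s q(1)] by simp
    have "{q, x} \<noteq> {u, v}"
    proof
      assume "{q, x} = {u, v}"
      hence "(q = u \<and> x = v) \<or> (q = v \<and> x = u)" by (simp add: doubleton_eq_iff)
      thus False using eq q(2) by auto
    qed
    thus "\<exists>q\<in>V. {q, x} \<in> E - {{u, v}} \<and> gdist E r q < gdist E r x" using q qV by auto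
  qed
qed

lemma tree_unique_parent:
  assumes t: "is_tree V E" and r: "r \<in> V" and e1: "{u1, v} \<in> E" and e2: "{u2, v} \<in> E"
    and d1: "gdist E r u1 + 1 = gdist E r v" and d2: "gdist E r u2 + 1 = gdist E r v"
  shows "u1 = u2"
proof (rule ccontr)
  assume ne: "u1 \<noteq> u2"
  have s: "simple_graph V E" and c: "graph_connected V E" using t unfolding is_tree_def by auto
  show False
  proof (rule tree_edge_removal_false[OF t r e1])
    fix x assume x: "x \<in> V" "x \<noteq> r"
    show "\<exists>q\<in>V. {q, x} \<in> E - {{u1, v}} \<and> gdist E r q < gdist E r x"
    proof (cases "x = v")
      case True
      have "u2 \<in> V" using simple_edge_in[OF s e2] by simp
      moreover have "{u2, v} \<noteq> {u1, v}" using ne simple_edge_in[OF s e2] by (auto simp: doubleton_eq_iff)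
      ultimately show ?thesis using True e2 d2 by (intro bexI[of _ u2]) auto
    next
      case False
      obtain q where q: "{q, x} \<in> E" "gdist E r q + 1 = gdist E r x"
        using dist_parent[OF s c r x] by blast
      have qV: "q \<in> V" using simple_edge_in[OF s q(1)] by simp
      have "{q, x} \<noteq> {u1, v}"
      proof
        assume "{q, x} = {u1, v}"
        hence "(q = u1 \<and> x = v) \<or> (q = v \<and> x = u1)" by (simp add: doubleton_eq_iff)
        thus False using False d1 q(2) by auto
      qed
      thus ?thesis using q qV by auto
    qed
  qed
qed

lemma nbrs_sub: "simple_graph V E \<Longrightarrow> nbrs E v \<subseteq> V"
  unfolding nbrs_def using simple_edge_in by fastforce

lemma nbrs_finite: "simple_graph V E \<Longrightarrow> finite (nbrs E v)"
  using nbrs_sub simple_graph_def finite_subset by metis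

lemma nbrs_sym: "u \<in> nbrs E v \<longleftrightarrow> v \<in> nbrs E u"
  unfolding nbrs_def by (simp add: insert_commute)

lemma leaf_nbrs:
  assumes "b \<in> leaves V E" "u \<in> nbrs E b" "u' \<in> nbrs E b"
  shows "u = u'"
proof -
  have "card (nbrs E b) = 1" using assms(1) unfolding leaves_def deg_def by simp
  then obtain z where "nbrs E b = {z}" using card_1_singletonE by blast
  thus ?thesis using assms(2,3) by simp
qed

definition cyc_arcs :: "'a list \<Rightarrow> ('a \<times> 'a) set" where
  "cyc_arcs vs = {(vs ! i, vs ! (Suc i mod length vs)) | i. i < length vs}"

lemma pred_mod_iff:
  fixes i i' m :: nat
  assumes "i < m" "i' < m"
  shows "Suc i' mod m = i \<longleftrightarrow> i' = (i + m - 1) mod m"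
proof (cases "i = 0")
  case True
  have "Suc i' mod m = 0 \<longleftrightarrow> Suc i' = m"
    using assms by (metis Suc_leI le_neq_implies_less mod_less mod_self nat.distinct(1))
  moreover have "(0 + m - 1) mod m = m - 1" using assms by simp
  ultimately show ?thesis using True assms by auto
next
  case False
  have "Suc i' mod m = i \<longleftrightarrow> Suc i' = i"
    using assms False by (metis Suc_leI le_neq_implies_less mod_less mod_self)
  moreover have "(i + m - 1) mod m = i - 1"
  proof -
    have "i + m - 1 = (i - 1) + m" using False by simp
    hence "(i + m - 1) mod m = (i - 1) mod m" by simp
    also have "\<dots> = i - 1" using assms by simp
    finally show ?thesis .
  qed
  ultimately show ?thesis using False by auto
qed

lemma cyc_out:
  assumes d: "distinct vs" and i: "i < length vs"
  shows "{y. (vs ! i, y) \<in> cyc_arcs vs} = {vs ! (Suc i mod length vs)}"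
proof -
  have "(vs ! i, y) \<in> cyc_arcs vs \<longleftrightarrow> y = vs ! (Suc i mod length vs)" for y
  proof
    assume "(vs ! i, y) \<in> cyc_arcs vs"
    then obtain i' where "i' < length vs" "vs ! i = vs ! i'" "y = vs ! (Suc i' mod length vs)"
      unfolding cyc_arcs_def by auto
    moreover have "i = i'" using calculation d i nth_eq_iff_index_eq by metis
    ultimately show "y = vs ! (Suc i mod length vs)" by simp
  next
    assume "y = vs ! (Suc i mod length vs)"
    thus "(vs ! i, y) \<in> cyc_arcs vs" unfolding cyc_arcs_def using i by blast
  qed
  thus ?thesis by auto
qed

lemma cyc_in:
  assumes d: "distinct vs" and i: "i < length vs"
  shows "{x. (x, vs ! i) \<in> cyc_arcs vs} = {vs ! ((i + length vs - 1) mod length vs)}"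
proof -
  let ?m = "length vs"
  have "(x, vs ! i) \<in> cyc_arcs vs \<longleftrightarrow> x = vs ! ((i + ?m - 1) mod ?m)" for x
  proof
    assume "(x, vs ! i) \<in> cyc_arcs vs"
    then obtain i' where i': "i' < ?m" "x = vs ! i'" "vs ! i = vs ! (Suc i' mod ?m)"
      unfolding cyc_arcs_def by auto
    have "Suc i' mod ?m < ?m" using i by (intro mod_less_divisor) (auto)
    hence "i = Suc i' mod ?m" using i'(3) d i nth_eq_iff_index_eq by metis
    hence "i' = (i + ?m - 1) mod ?m" using pred_mod_iff[OF i i'(1)] by simp
    thus "x = vs ! ((i + ?m - 1) mod ?m)" using i' by simp
  next
    assume x: "x = vs ! ((i + ?m - 1) mod ?m)"
    let ?i' = "(i + ?m - 1) mod ?m"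
    have lt: "?i' < ?m" using i by (intro mod_less_divisor) auto
    have "Suc ?i' mod ?m = i" using pred_mod_iff[OF i lt] by simp
    hence "(vs ! ?i', vs ! (Suc ?i' mod ?m)) \<in> cyc_arcs vs" unfolding cyc_arcs_def using lt by blast
    thus "(x, vs ! i) \<in> cyc_arcs vs" using x \<open>Suc ?i' mod ?m = i\<close> by simp
  qed
  thus ?thesis by auto
qed

lemma cyc_mem: "(x, y) \<in> cyc_arcs vs \<Longrightarrow> x \<in> set vs \<and> y \<in> set vs"
proof -
  assume "(x, y) \<in> cyc_arcs vs"
  then obtain i where i: "i < length vs" "x = vs ! i" "y = vs ! (Suc i mod length vs)"
    unfolding cyc_arcs_def by auto
  have "Suc i mod length vs < length vs" using i by (intro mod_less_divisor) (auto)
  thus ?thesis using i by simp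
qed

lemma cyc_notin:
  assumes "v \<notin> set vs"
  shows "{y. (v, y) \<in> cyc_arcs vs} = {}" "{x. (x, v) \<in> cyc_arcs vs} = {}"
  using assms cyc_mem by fastforce+

lemma cyc_eulerian:
  assumes d: "distinct vs"
  shows "indeg (cyc_arcs vs) v = outdeg (cyc_arcs vs) v"
proof (cases "v \<in> set vs")
  case True
  then obtain i where i: "i < length vs" "v = vs ! i" by (metis in_set_conv_nth)
  show ?thesis unfolding indeg_def outdeg_def using cyc_in[OF d i(1)] cyc_out[OF d i(1)] i(2) by simp
next
  case False
  show ?thesis unfolding indeg_def outdeg_def using cyc_notin[OF False] by simp
qed

definition cdir :: "bool \<Rightarrow> nat \<Rightarrow> nat \<Rightarrow> nat \<Rightarrow> bool" where
  "cdir m n i j = (if m then j = Suc i mod n else (Suc i < n \<and> j = Suc i) \<or> (i = 0 \<and> j = n - 1))"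

definition carc :: "bool \<Rightarrow> (nat \<Rightarrow> 'a) \<Rightarrow> nat \<Rightarrow> ('a \<times> 'a) set" where
  "carc m c n = {(c i, c j) | i j. i < n \<and> j < n \<and> cdir m n i j}"

definition core :: "bool \<Rightarrow> (nat \<Rightarrow> 'a) \<Rightarrow> nat \<Rightarrow> 'a \<Rightarrow> nat set \<Rightarrow> ('a \<times> 'a) set" where
  "core m c n w J = carc m c n \<union> {(c j, w) | j. j \<in> J} \<union> {(w, c 0)}"

definition zcyc :: "(nat \<Rightarrow> 'a) \<Rightarrow> 'a \<Rightarrow> nat \<Rightarrow> ('a \<times> 'a) set" where
  "zcyc c w j = {(c i, c (Suc i)) | i. i < j} \<union> {(c j, w), (w, c 0)}"

definition vsz :: "(nat \<Rightarrow> 'a) \<Rightarrow> 'a \<Rightarrow> nat \<Rightarrow> 'a list" where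
  "vsz c w j = map c [0..<Suc j] @ [w]"

lemma vsz_len: "length (vsz c w j) = Suc (Suc j)" unfolding vsz_def by simp
lemma vsz_nth1: "i \<le> j \<Longrightarrow> vsz c w j ! i = c i" unfolding vsz_def by (simp add: nth_append)
lemma vsz_nth2: "vsz c w j ! Suc j = w" unfolding vsz_def by (simp add: nth_append)

lemma zcyc_list: "zcyc c w j = cyc_arcs (vsz c w j)"
proof
  show "zcyc c w j \<subseteq> cyc_arcs (vsz c w j)"
  proof
    fix a assume "a \<in> zcyc c w j"
    then consider (p) i where "i < j" "a = (c i, c (Suc i))" | (q) "a = (c j, w)" | (r) "a = (w, c 0)"
      unfolding zcyc_def by blast
    thus "a \<in> cyc_arcs (vsz c w j)"
    proof cases
      case p
      have "Suc i mod Suc (Suc j) = Suc i" using p by simp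
      hence "(vsz c w j ! i, vsz c w j ! (Suc i mod length (vsz c w j))) \<in> cyc_arcs (vsz c w j)"
        unfolding cyc_arcs_def vsz_len using p by auto
      thus ?thesis using p vsz_nth1[of i j c w] vsz_nth1[of "Suc i" j c w] vsz_len[of c w j]
        \<open>Suc i mod Suc (Suc j) = Suc i\<close> by simp
    next
      case q
      have "(vsz c w j ! j, vsz c w j ! (Suc j mod length (vsz c w j))) \<in> cyc_arcs (vsz c w j)"
        unfolding cyc_arcs_def vsz_len by auto
      thus ?thesis using q vsz_nth1[of j j c w] vsz_nth2[of c w j] vsz_len[of c w j] by simp
    next
      case r
      have "(vsz c w j ! Suc j, vsz c w j ! (Suc (Suc j) mod length (vsz c w j))) \<in> cyc_arcs (vsz c w j)"
        unfolding cyc_arcs_def vsz_len by auto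
      thus ?thesis using r vsz_nth1[of 0 j c w] vsz_nth2[of c w j] vsz_len[of c w j] by simp
    qed
  qed
next
  show "cyc_arcs (vsz c w j) \<subseteq> zcyc c w j"
  proof
    fix a assume "a \<in> cyc_arcs (vsz c w j)"
    then obtain i where i: "i < Suc (Suc j)" "a = (vsz c w j ! i, vsz c w j ! (Suc i mod Suc (Suc j)))"
      unfolding cyc_arcs_def vsz_len by auto
    consider "i < j" | "i = j" | "i = Suc j" using i(1) by linarith
    thus "a \<in> zcyc c w j"
    proof cases
      case 1
      hence "a = (c i, c (Suc i))" using i vsz_nth1[of i j c w] vsz_nth1[of "Suc i" j c w] by simp
      thus ?thesis unfolding zcyc_def using 1 by blast
    next
      case 2
      hence "a = (c j, w)" using i vsz_nth1[of j j c w] vsz_nth2[of c w j] by simp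
      thus ?thesis unfolding zcyc_def by blast
    next
      case 3
      hence "a = (w, c 0)" using i vsz_nth1[of 0 j c w] vsz_nth2[of c w j] by simp
      thus ?thesis unfolding zcyc_def by blast
    qed
  qed
qed

lemma carc1_list:
  assumes "0 < n"
  shows "carc True c n = cyc_arcs (map c [0..<n])"
proof -
  have "carc True c n = {(c i, c (Suc i mod n)) | i. i < n}"
    unfolding carc_def cdir_def using assms by auto
  also have "\<dots> = cyc_arcs (map c [0..<n])"
  proof -
    have m: "\<And>i. i < n \<Longrightarrow> map c [0..<n] ! i = c i" by simp
    have s: "\<And>i. i < n \<Longrightarrow> Suc i mod n < n" using assms by simp
    show ?thesis
    proof (intro set_eqI iffI)
      fix a assume "a \<in> {(c i, c (Suc i mod n)) |i. i < n}"
      then obtain i where i: "i < n" "a = (c i, c (Suc i mod n))" by blast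
      hence "a = (map c [0..<n] ! i, map c [0..<n] ! (Suc i mod length (map c [0..<n])))"
        using m s by simp
      moreover have "i < length (map c [0..<n])" using i by simp
      ultimately show "a \<in> cyc_arcs (map c [0..<n])" unfolding cyc_arcs_def by blast
    next
      fix a assume "a \<in> cyc_arcs (map c [0..<n])"
      then obtain i where i: "i < n" "a = (map c [0..<n] ! i, map c [0..<n] ! (Suc i mod length (map c [0..<n])))"
        unfolding cyc_arcs_def by auto
      hence "a = (c i, c (Suc i mod n))" using m s by simp
      thus "a \<in> {(c i, c (Suc i mod n)) |i. i < n}" using i by blast
    qed
  qed
  finally show ?thesis .
qed

locale coreloc =
  fixes c :: "nat \<Rightarrow> 'a" and n :: nat and w :: 'a and J :: "nat set"
  assumes inj: "inj_on c {..<n}" and wn: "w \<notin> c ` {..<n}" and n3: "3 \<le> n"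
    and Jb: "\<And>j. j \<in> J \<Longrightarrow> 0 < j \<and> j < n - 1"
begin

lemma ceq: "i < n \<Longrightarrow> j < n \<Longrightarrow> c i = c j \<longleftrightarrow> i = j"
  using inj_on_eq_iff[OF inj] by simp

lemma cw: "i < n \<Longrightarrow> c i \<noteq> w"
  using wn by (metis image_eqI lessThan_iff)

lemma vsz_distinct:
  assumes "j < n"
  shows "distinct (vsz c w j)"
proof -
  have "distinct (map c [0..<Suc j])"
  proof -
    have "{0..<Suc j} \<subseteq> {..<n}" using assms by auto
    hence "inj_on c {0..<Suc j}" using inj_on_subset inj by blast
    thus ?thesis unfolding distinct_map set_upt by simp
  qed
  moreover have "w \<notin> set (map c [0..<Suc j])"
  proof
    assume "w \<in> set (map c [0..<Suc j])"
    then obtain x where x: "x \<in> {0..<Suc j}" "w = c x" by (metis imageE set_map set_upt)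
    hence "x < n" using assms by auto
    thus False using cw[OF \<open>x < n\<close>] x(2) by simp
  qed
  ultimately show ?thesis unfolding vsz_def by (simp del: upt_Suc)
qed

lemma zcyc_eul: "j < n \<Longrightarrow> indeg (zcyc c w j) v = outdeg (zcyc c w j) v"
  unfolding zcyc_list by (rule cyc_eulerian[OF vsz_distinct])

lemma carc1_eul: "indeg (carc True c n) v = outdeg (carc True c n) v"
proof -
  have "distinct (map c [0..<n])" using inj by (simp add: distinct_map atLeast0LessThan)
  moreover have "0 < n" using n3 by simp
  ultimately show ?thesis using carc1_list[OF \<open>0 < n\<close>, of c] cyc_eulerian[OF \<open>distinct (map c [0..<n])\<close>] by simp
qed

end

lemma has_out:
  assumes "finite A" "indeg A v = outdeg A v" "(x, v) \<in> A"
  shows "\<exists>y. (v, y) \<in> A"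
proof -
  have "finite {x. (x, v) \<in> A}"
  proof -
    have "{x. (x, v) \<in> A} = fst ` {a\<in>A. snd a = v}" by force
    thus ?thesis using assms(1) by simp
  qed
  hence "indeg A v > 0" unfolding indeg_def using assms(3) card_gt_0_iff by blast
  hence "outdeg A v > 0" using assms(2) by simp
  hence "{y. (v, y) \<in> A} \<noteq> {}" unfolding outdeg_def by (metis card.empty less_irrefl)
  thus ?thesis by blast
qed

lemma has_in:
  assumes "finite A" "indeg A v = outdeg A v" "(v, y) \<in> A"
  shows "\<exists>x. (x, v) \<in> A"
proof -
  have "finite {y. (v, y) \<in> A}"
  proof -
    have "{y. (v, y) \<in> A} = snd ` {a\<in>A. fst a = v}" by force
    thus ?thesis using assms(1) by simp
  qed
  hence "outdeg A v > 0" unfolding outdeg_def using assms(3) card_gt_0_iff by blast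
  hence "indeg A v > 0" using assms(2) by simp
  hence "{x. (x, v) \<in> A} \<noteq> {}" unfolding indeg_def by (metis card.empty less_irrefl)
  thus ?thesis by blast
qed

lemma eul_diff:
  assumes "finite A" "Z \<subseteq> A" "\<And>v. indeg A v = outdeg A v" "\<And>v. indeg Z v = outdeg Z v"
  shows "indeg (A - Z) v = outdeg (A - Z) v"
proof -
  have f1: "finite {x. (x, v) \<in> A}"
  proof -
    have "{x. (x, v) \<in> A} = fst ` {a\<in>A. snd a = v}" by force
    thus ?thesis using assms(1) by simp
  qed
  have f2: "finite {y. (v, y) \<in> A}"
  proof -
    have "{y. (v, y) \<in> A} = snd ` {a\<in>A. fst a = v}" by force
    thus ?thesis using assms(1) by simp
  qed
  have "{x. (x, v) \<in> A - Z} = {x. (x, v) \<in> A} - {x. (x, v) \<in> Z}" by blast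
  moreover have "{x. (x, v) \<in> Z} \<subseteq> {x. (x, v) \<in> A}" using assms(2) by blast
  ultimately have i: "indeg (A - Z) v = indeg A v - indeg Z v"
    unfolding indeg_def using f1 card_Diff_subset finite_subset by metis
  have "{y. (v, y) \<in> A - Z} = {y. (v, y) \<in> A} - {y. (v, y) \<in> Z}" by blast
  moreover have "{y. (v, y) \<in> Z} \<subseteq> {y. (v, y) \<in> A}" using assms(2) by blast
  ultimately have o: "outdeg (A - Z) v = outdeg A v - outdeg Z v"
    unfolding outdeg_def using f2 card_Diff_subset finite_subset by metis
  show ?thesis using i o assms(3,4) by simp
qed

context coreloc
begin

lemma Jn: "j \<in> J \<Longrightarrow> j < n" using Jb n3 by fastforce

lemma carc_sub: "carc m c n \<subseteq> c ` {..<n} \<times> c ` {..<n}"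
  unfolding carc_def by auto

lemma core_fin: "finite (core m c n w J)"
proof -
  have "finite (carc m c n)" using carc_sub finite_subset by blast
  moreover have "{(c j, w) | j. j \<in> J} = (\<lambda>j. (c j, w)) ` J" by blast
  moreover have "finite J" using Jn finite_subset[of J "{..<n}"] by blast
  ultimately show ?thesis unfolding core_def by simp
qed

lemma carc_mem: "(x, y) \<in> carc m c n \<Longrightarrow> \<exists>i j. i < n \<and> j < n \<and> cdir m n i j \<and> x = c i \<and> y = c j"
  unfolding carc_def by blast

lemma core_out_w: "(w, x) \<in> core m c n w J \<Longrightarrow> x = c 0"
proof -
  assume a: "(w, x) \<in> core m c n w J"
  show "x = c 0"
  proof (cases "(w, x) \<in> carc m c n")
    case True
    then obtain i where i: "i < n" "w = c i" using carc_mem by blast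
    thus ?thesis using cw[OF i(1)] i(2) by simp
  next
    case False
    hence "(w, x) \<in> {(c j, w) | j. j \<in> J} \<or> (w, x) = (w, c 0)" using a unfolding core_def by blast
    thus ?thesis
    proof
      assume "(w, x) \<in> {(c j, w) | j. j \<in> J}"
      then obtain j where "j \<in> J" "w = c j" by blast
      thus ?thesis using cw Jn by metis
    qed simp
  qed
qed

lemma core_in_w: "(x, w) \<in> core m c n w J \<Longrightarrow> \<exists>j\<in>J. x = c j"
proof -
  assume a: "(x, w) \<in> core m c n w J"
  show ?thesis
  proof (cases "(x, w) \<in> carc m c n")
    case True
    then obtain i where i: "i < n" "w = c i" using carc_mem by blast
    thus ?thesis using cw[OF i(1)] i(2) by simp
  next
    case False
    hence "(x, w) \<in> {(c j, w) | j. j \<in> J} \<or> (x, w) = (w, c 0)" using a unfolding core_def by blast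
    thus ?thesis
    proof
      assume "(x, w) = (w, c 0)"
      hence "w = c 0" by simp
      moreover have "c 0 \<noteq> w" using cw n3 by simp
      ultimately show ?thesis by simp
    qed blast
  qed
qed

lemma into_ci:
  assumes "(x, c i) \<in> core m c n w J" "1 \<le> i" "i < n - 1"
  shows "x = c (i - 1)"
proof (cases "(x, c i) \<in> carc m c n")
  case True
  then obtain a b where ab: "a < n" "b < n" "cdir m n a b" "x = c a" "c i = c b" using carc_mem by blast
  have "b = i" using ab ceq assms by simp
  show ?thesis
  proof (cases m)
    case True
    hence "i = Suc a mod n" using ab \<open>b = i\<close> unfolding cdir_def by simp
    moreover have "Suc a \<noteq> n" using calculation assms(2) by auto
    ultimately have "i = Suc a" using ab(1) by simp
    thus ?thesis using ab by simp
  next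
    case False
    hence "(Suc a < n \<and> i = Suc a) \<or> (a = 0 \<and> i = n - 1)" using ab \<open>b = i\<close> unfolding cdir_def by simp
    hence "i = Suc a" using assms by auto
    thus ?thesis using ab by simp
  qed
next
  case False
  hence "(x, c i) \<in> {(c j, w) | j. j \<in> J} \<or> (x, c i) = (w, c 0)" using assms unfolding core_def by blast
  thus ?thesis
  proof
    assume "(x, c i) \<in> {(c j, w) | j. j \<in> J}"
    hence "c i = w" by blast
    thus ?thesis using cw assms by simp
  next
    assume "(x, c i) = (w, c 0)"
    hence "c i = c 0" by simp
    moreover have "i < n" "0 < n" using assms n3 by auto
    ultimately have "i = 0" using ceq by blast
    thus ?thesis using assms by simp
  qed
qed

lemma no_w_case:
  assumes sub: "A \<subseteq> core m c n w J" and eul: "\<And>v. indeg A v = outdeg A v"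
    and nw: "(w, c 0) \<notin> A"
  shows "A = {} \<or> (m \<and> A = carc True c n)"
proof -
  have finA: "finite A" using sub core_fin finite_subset by blast
  have "{x. (w, x) \<in> A} = {}" using sub nw core_out_w by blast
  hence "outdeg A w = 0" unfolding outdeg_def by simp
  hence "indeg A w = 0" using eul by simp
  hence noin: "\<And>x. (x, w) \<notin> A"
    using has_out[OF finA eul] core_out_w sub nw by blast
  have subc: "A \<subseteq> carc m c n"
  proof
    fix a assume a: "a \<in> A"
    obtain x y where xy: "a = (x, y)" by (cases a)
    have "(x, y) \<in> core m c n w J" using a sub xy by blast
    moreover have "y \<noteq> w" using noin a xy by blast
    moreover have "(x, y) \<noteq> (w, c 0)" using nw a xy by blast
    ultimately show "a \<in> carc m c n" unfolding core_def xy by blast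
  qed
  show ?thesis
  proof (cases m)
    case False
    define g where "g v = - real (inv_into {..<n} c v)" for v
    have gc: "\<And>i. i < n \<Longrightarrow> g (c i) = - real i"
      unfolding g_def using inj by (simp add: inv_into_f_f)
    have dirlt: "\<And>u v. (u, v) \<in> A \<Longrightarrow> \<exists>i j. i < n \<and> j < n \<and> i < j \<and> u = c i \<and> v = c j"
    proof -
      fix u v assume "(u, v) \<in> A"
      then obtain i j where ij: "i < n" "j < n" "cdir m n i j" "u = c i" "v = c j"
        using subc carc_mem by blast
      hence "i < j" using False n3 unfolding cdir_def by auto
      thus "\<exists>i j. i < n \<and> j < n \<and> i < j \<and> u = c i \<and> v = c j" using ij by blast
    qed
    have mono: "\<And>u v. (u, v) \<in> A \<Longrightarrow> g v \<le> g u"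
    proof -
      fix u v assume "(u, v) \<in> A"
      then obtain i j where "i < n" "j < n" "i < j" "u = c i" "v = c j" using dirlt by blast
      thus "g v \<le> g u" using gc by simp
    qed
    have "A = {}"
    proof (rule ccontr)
      assume "A \<noteq> {}"
      then obtain u v where uv: "(u, v) \<in> A" by auto
      then obtain i j where ij: "i < n" "j < n" "i < j" "u = c i" "v = c j" using dirlt by blast
      have "g u = g v" using potential[OF finA eul mono uv] .
      thus False using ij gc by simp
    qed
    thus ?thesis by simp
  next
    case True
    show ?thesis
    proof (cases "A = {}")
      case True thus ?thesis by simp
    next
      case False
      then obtain a where aA: "a \<in> A" by blast
      obtain x y where xy: "a = (x, y)" by (cases a)
      have "(x, y) \<in> carc m c n" using aA xy subc by blast
      then obtain i j where ij0: "i < n" "j < n" "cdir m n i j" "x = c i" "y = c j"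
        using carc_mem by blast
      have ij: "i < n" "j < n" "cdir m n i j" "a = (c i, c j)" using ij0 xy by auto
      have jdef: "j = Suc i mod n" using ij \<open>m\<close> unfolding cdir_def by simp
      have step: "\<forall>k. (c ((i + k) mod n), c (Suc ((i + k) mod n) mod n)) \<in> A"
      proof
        fix k show "(c ((i + k) mod n), c (Suc ((i + k) mod n) mod n)) \<in> A"
        proof (induction k)
          case 0
          thus ?case using aA ij jdef by simp
        next
          case (Suc k)
          let ?a = "(i + k) mod n"
          let ?b = "Suc ?a mod n"
          have bn: "?b < n" using n3 by simp
          obtain y where y: "(c ?b, y) \<in> A" using has_out[OF finA eul Suc.IH] by blast
          then obtain i' j' where ij': "i' < n" "j' < n" "cdir m n i' j'" "c ?b = c i'" "y = c j'"
            using subc carc_mem by blast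
          have "i' = ?b" using ij' bn ceq by simp
          hence "y = c (Suc ?b mod n)" using ij' \<open>m\<close> unfolding cdir_def by simp
          moreover have "(i + Suc k) mod n = ?b" by (simp add: mod_Suc_eq)
          ultimately show ?case using y by simp
        qed
      qed
      have "carc True c n \<subseteq> A"
      proof
        fix b assume "b \<in> carc True c n"
        then obtain i' j' where ij': "i' < n" "j' < n" "cdir True n i' j'" "b = (c i', c j')"
          unfolding carc_def by blast
        have "(i + (i' + n - i)) mod n = i'" using ij ij' by simp
        thus "b \<in> A" using step[rule_format, of "i' + n - i"] ij' unfolding cdir_def by simp
      qed
      thus ?thesis using subc \<open>m\<close> by auto
    qed
  qed
qed


lemma w_case:
  assumes sub: "A \<subseteq> core m c n w J" and eul: "\<And>v. indeg A v = outdeg A v"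
    and wA: "(w, c 0) \<in> A"
  shows "\<exists>j\<in>J. A = zcyc c w j"
proof -
  have finA: "finite A" using sub core_fin finite_subset by blast
  have "{x. (w, x) \<in> A} = {c 0}" using sub wA core_out_w by blast
  hence "outdeg A w = 1" unfolding outdeg_def by simp
  hence "indeg A w = 1" using eul by simp
  then obtain x0 where x0: "{x. (x, w) \<in> A} = {x0}" unfolding indeg_def using card_1_singletonE by blast
  hence "(x0, w) \<in> A" by blast
  then obtain j where jJ: "j \<in> J" and xj: "x0 = c j" using core_in_w sub by blast
  have jb: "0 < j" "j < n - 1" using Jb jJ by auto
  have bk: "\<forall>d. d < j \<longrightarrow> (c (j - d - 1), c (j - d)) \<in> A"
  proof
    fix d show "d < j \<longrightarrow> (c (j - d - 1), c (j - d)) \<in> A"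
    proof (induction d)
      case 0
      show ?case
      proof
        assume "0 < j"
        obtain x where x: "(x, c j) \<in> A" using has_in[OF finA eul \<open>(x0, w) \<in> A\<close>[unfolded xj]] by blast
        have "x = c (j - 1)" using into_ci[of x j m] x sub jb by auto
        thus "(c (j - 0 - 1), c (j - 0)) \<in> A" using x by simp
      qed
    next
      case (Suc d)
      show ?case
      proof
        assume sd: "Suc d < j"
        have "(c (j - d - 1), c (j - d)) \<in> A" using Suc.IH sd by simp
        moreover have "j - d - 1 = j - Suc d" by simp
        ultimately have "(c (j - Suc d), c (j - d)) \<in> A" by simp
        then obtain x where x: "(x, c (j - Suc d)) \<in> A" using has_in[OF finA eul] by blast
        have "x = c (j - Suc d - 1)" using into_ci[of x "j - Suc d" m] x sub jb sd by auto
        thus "(c (j - Suc d - 1), c (j - Suc d)) \<in> A" using x by simp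
      qed
    qed
  qed
  have Zsub: "zcyc c w j \<subseteq> A"
  proof
    fix a assume "a \<in> zcyc c w j"
    then consider (p) i where "i < j" "a = (c i, c (Suc i))" | (q) "a = (c j, w)" | (r) "a = (w, c 0)"
      unfolding zcyc_def by blast
    thus "a \<in> A"
    proof cases
      case p
      have "j - (j - i - 1) - 1 = i" "j - (j - i - 1) = Suc i" using p by auto
      thus ?thesis using bk[rule_format, of "j - i - 1"] p by simp
    next
      case q thus ?thesis using \<open>(x0, w) \<in> A\<close> xj by simp
    next
      case r thus ?thesis using wA by simp
    qed
  qed
  have jn: "j < n" using jb by simp
  have eul': "\<And>v. indeg (A - zcyc c w j) v = outdeg (A - zcyc c w j) v"
    using eul_diff[OF finA Zsub eul zcyc_eul[OF jn]] by blast
  have sub': "A - zcyc c w j \<subseteq> core m c n w J" using sub by blast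
  have nw': "(w, c 0) \<notin> A - zcyc c w j" unfolding zcyc_def by blast
  have "A - zcyc c w j = {} \<or> (m \<and> A - zcyc c w j = carc True c n)"
    by (rule no_w_case[OF sub' eul' nw'])
  moreover have "A - zcyc c w j \<noteq> carc True c n"
  proof
    assume eq: "A - zcyc c w j = carc True c n"
    have "(c 0, c 1) \<in> carc True c n" unfolding carc_def cdir_def using n3 by force
    moreover have "(c 0, c (Suc 0)) \<in> zcyc c w j" unfolding zcyc_def using jb by blast
    ultimately show False using eq by auto
  qed
  ultimately have "A - zcyc c w j = {}" by blast
  hence "A = zcyc c w j" using Zsub by blast
  thus ?thesis using jJ by blast
qed

lemma core_char:
  assumes sub: "A \<subseteq> core m c n w J" and eul: "\<And>v. indeg A v = outdeg A v"
  shows "A = {} \<or> (m \<and> A = carc True c n) \<or> (\<exists>j\<in>J. A = zcyc c w j)"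
  using no_w_case[OF sub eul] w_case[OF sub eul] by blast

lemma zcyc_core: "j \<in> J \<Longrightarrow> zcyc c w j \<subseteq> core m c n w J"
proof
  fix a assume jJ: "j \<in> J" and "a \<in> zcyc c w j"
  then consider (p) i where "i < j" "a = (c i, c (Suc i))" | (q) "a = (c j, w)" | (r) "a = (w, c 0)"
    unfolding zcyc_def by blast
  thus "a \<in> core m c n w J"
  proof cases
    case p
    have "Suc i < n" using p Jb[OF jJ] by auto
    hence "cdir m n i (Suc i)" unfolding cdir_def by simp
    hence "(c i, c (Suc i)) \<in> carc m c n" unfolding carc_def using \<open>Suc i < n\<close> by force
    thus ?thesis using p unfolding core_def by blast
  next
    case q thus ?thesis using jJ unfolding core_def by blast
  next
    case r thus ?thesis unfolding core_def by blast
  qed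
qed

lemma carc_core: "carc m c n \<subseteq> core m c n w J" unfolding core_def by blast

lemma zcyc_inj: "j \<in> J \<Longrightarrow> j' \<in> J \<Longrightarrow> zcyc c w j = zcyc c w j' \<Longrightarrow> j = j'"
proof -
  assume a: "j \<in> J" "j' \<in> J" "zcyc c w j = zcyc c w j'"
  have "(c j, w) \<in> zcyc c w j'" using a unfolding zcyc_def by blast
  then consider (p) i where "i < j'" "(c j, w) = (c i, c (Suc i))" | (q) "(c j, w) = (c j', w)"
    | (r) "(c j, w) = (w, c 0)"
    unfolding zcyc_def by blast
  thus "j = j'"
  proof cases
    case p
    have "Suc i < n" using p Jb[OF a(2)] by auto
    thus ?thesis using p cw by auto
  next
    case q thus ?thesis using ceq Jn a by auto
  next
    case r thus ?thesis using cw Jn a by auto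
  qed
qed

lemma zcyc_ne: "zcyc c w j \<noteq> {}" unfolding zcyc_def by blast

lemma zcyc_not_carc: "zcyc c w j \<noteq> carc True c n"
proof
  assume "zcyc c w j = carc True c n"
  hence "(w, c 0) \<in> carc True c n" unfolding zcyc_def by blast
  then obtain i where i: "i < n" "w = c i" using carc_mem by blast
  thus False using cw[OF i(1)] i(2) by simp
qed

lemma carc_ne: "carc True c n \<noteq> {}"
  unfolding carc_def cdir_def using n3 by force

end

lemma cdir_excl:
  assumes "i < n" "3 \<le> n"
  shows "cdir m n i (Suc i mod n) \<noteq> cdir m n (Suc i mod n) i"
proof (cases "Suc i < n")
  case lt: True
  hence s: "Suc i mod n = Suc i" by simp
  show ?thesis
  proof (cases m)
    case True
    have "Suc (Suc i) mod n \<noteq> i"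
    proof (cases "Suc (Suc i) < n")
      case True thus ?thesis by simp
    next
      case False
      hence "Suc (Suc i) = n" using lt by simp
      thus ?thesis using assms by simp
    qed
    thus ?thesis unfolding cdir_def using s True by simp
  next
    case False
    thus ?thesis unfolding cdir_def using s lt by auto
  qed
next
  case False
  hence e: "Suc i = n" using assms by simp
  hence s: "Suc i mod n = 0" by simp
  show ?thesis
  proof (cases m)
    case True
    have "Suc 0 mod n \<noteq> i" using assms e by simp
    thus ?thesis unfolding cdir_def using s True by simp
  next
    case False
    thus ?thesis unfolding cdir_def using s e assms by auto
  qed
qed

locale cfg =
  fixes V :: "'a set" and ET :: "'a set set" and c :: "nat \<Rightarrow> 'a" and n :: nat and r w :: 'a
  assumes tree: "is_tree V ET"
    and bij: "bij_betw c {..<n} (leaves V ET)"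
    and n3: "3 \<le> n"
    and rV: "r \<in> V" and rI: "r \<notin> leaves V ET"
    and wV: "w \<in> V" and wI: "w \<notin> leaves V ET" and wr: "w \<noteq> r"
    and wmax: "\<And>u. u \<in> V \<Longrightarrow> u \<notin> leaves V ET \<Longrightarrow> gdist ET r u \<le> gdist ET r w"
    and c0w: "{c 0, w} \<in> ET"
    and cnw: "{c (n - 1), w} \<notin> ET"
begin

abbreviation "Lv \<equiv> leaves V ET"
abbreviation "dd \<equiv> gdist ET r"

definition "JJ = {j. 0 < j \<and> j < n \<and> {c j, w} \<in> ET}"
definition "TA = {(u, v). {u, v} \<in> ET \<and> u \<notin> Lv \<and> v \<notin> Lv \<and> dd v < dd u}"
definition "LU = {(b, u). {b, u} \<in> ET \<and> b \<in> Lv \<and> b \<noteq> c 0}"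
definition "DD m = TA \<union> LU \<union> {(w, c 0)} \<union> carc m c n"

lemma s: "simple_graph V ET" using tree unfolding is_tree_def by simp
lemma cn: "graph_connected V ET" using tree unfolding is_tree_def by simp
lemma finV: "finite V" using s unfolding simple_graph_def by simp
lemma LvV: "Lv \<subseteq> V" unfolding leaves_def by auto
lemma cinj: "inj_on c {..<n}" using bij unfolding bij_betw_def by simp
lemma cL: "i < n \<Longrightarrow> c i \<in> Lv" using bij unfolding bij_betw_def by auto
lemma Lc: "b \<in> Lv \<Longrightarrow> \<exists>i<n. b = c i" using bij unfolding bij_betw_def by auto
lemma ceq: "i < n \<Longrightarrow> j < n \<Longrightarrow> c i = c j \<longleftrightarrow> i = j" using inj_on_eq_iff[OF cinj] by simp
lemma wn: "w \<notin> c ` {..<n}" using cL wI by auto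
lemma cw: "i < n \<Longrightarrow> c i \<noteq> w" using cL wI by auto

lemma edge_in: "{u, v} \<in> ET \<Longrightarrow> u \<in> V \<and> v \<in> V \<and> u \<noteq> v" using simple_edge_in[OF s] by blast

lemma leaf_adj_false:
  assumes b: "b \<in> Lv" and b': "b' \<in> Lv" and e: "{b, b'} \<in> ET"
  shows False
proof -
  have nb: "\<And>u. {u, b} \<in> ET \<Longrightarrow> u = b'"
    using leaf_nbrs[OF b] e unfolding nbrs_def by (simp add: insert_commute)
  have nb': "\<And>u. {u, b'} \<in> ET \<Longrightarrow> u = b"
    using leaf_nbrs[OF b'] e unfolding nbrs_def by blast
  have "b \<in> V" using b LvV by blast
  have "(b, r) \<in> (grel ET)\<^sup>*" using cn \<open>b \<in> V\<close> rV unfolding graph_connected_def grel_def by simp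
  hence "r \<in> {b, b'}"
  proof (induction rule: rtrancl_induct)
    case base thus ?case by simp
  next
    case (step y z)
    hence "{y, z} \<in> ET" unfolding grel_def by simp
    hence "{z, y} \<in> ET" by (simp add: insert_commute)
    thus ?case using step.IH nb nb' by auto
  qed
  thus False using rI b b' by auto
qed

lemma leaf_nbr_inner: "b \<in> Lv \<Longrightarrow> {b, u} \<in> ET \<Longrightarrow> u \<notin> Lv"
  using leaf_adj_false by blast

lemma c0_nbr: "{c 0, u} \<in> ET \<Longrightarrow> u = w"
proof -
  assume a: "{c 0, u} \<in> ET"
  have "c 0 \<in> Lv" using cL n3 by simp
  moreover have "u \<in> nbrs ET (c 0)" "w \<in> nbrs ET (c 0)" using a c0w unfolding nbrs_def
    by (simp_all add: insert_commute)
  ultimately show "u = w" using leaf_nbrs by metis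
qed

lemma JJb: "j \<in> JJ \<Longrightarrow> 0 < j \<and> j < n - 1"
proof -
  assume "j \<in> JJ"
  hence "0 < j" "j < n" "{c j, w} \<in> ET" unfolding JJ_def by auto
  moreover have "j \<noteq> n - 1" using calculation cnw by auto
  ultimately show ?thesis by simp
qed

lemma coreloc: "coreloc c n w JJ"
  unfolding coreloc_def using cinj wn n3 JJb by blast

lemma cyc_edge_leaves: "e \<in> cycle_edges c n \<Longrightarrow> \<exists>i<n. e = {c i, c (Suc i mod n)}"
  unfolding cycle_edges_def by blast

lemma cyc_notin_ET: "e \<in> cycle_edges c n \<Longrightarrow> e \<notin> ET"
proof
  assume "e \<in> cycle_edges c n" "e \<in> ET"
  then obtain i where i: "i < n" "e = {c i, c (Suc i mod n)}" using cyc_edge_leaves by blast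
  have "Suc i mod n < n" using n3 by simp
  thus False using leaf_adj_false[OF cL[OF i(1)] cL] i \<open>e \<in> ET\<close> by blast
qed

lemma carc_cyc: "(x, y) \<in> carc m c n \<Longrightarrow> {x, y} \<in> cycle_edges c n"
proof -
  assume "(x, y) \<in> carc m c n"
  then obtain i j where ij: "i < n" "j < n" "cdir m n i j" "x = c i" "y = c j"
    unfolding carc_def by blast
  show ?thesis
  proof (cases "j = Suc i mod n")
    case True
    thus ?thesis unfolding cycle_edges_def using ij by blast
  next
    case False
    hence "i = 0 \<and> j = n - 1" using ij unfolding cdir_def by (auto split: if_splits)
    moreover have "Suc (n - 1) mod n = 0" using n3 by simp
    ultimately have "{x, y} = {c (n - 1), c (Suc (n - 1) mod n)}" using ij by (simp add: insert_commute)
    moreover have "n - 1 < n" using n3 by simp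
    ultimately show ?thesis unfolding cycle_edges_def by blast
  qed
qed

lemma carc_iff: "i < n \<Longrightarrow> j < n \<Longrightarrow> (c i, c j) \<in> carc m c n \<longleftrightarrow> cdir m n i j"
proof
  assume a: "i < n" "j < n" "(c i, c j) \<in> carc m c n"
  then obtain i' j' where ij: "i' < n" "j' < n" "cdir m n i' j'" "c i = c i'" "c j = c j'"
    unfolding carc_def by blast
  thus "cdir m n i j" using ceq a by simp
next
  assume "i < n" "j < n" "cdir m n i j"
  thus "(c i, c j) \<in> carc m c n" unfolding carc_def by blast
qed

lemma X_ET: "(u, v) \<in> TA \<union> LU \<union> {(w, c 0)} \<Longrightarrow> {u, v} \<in> ET"
  unfolding TA_def LU_def using c0w by (auto simp: insert_commute)

lemma orient: "orientation V (ET \<union> cycle_edges c n) (DD m)"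
  unfolding orientation_def
proof (intro conjI allI impI)
  show "\<forall>(u, v)\<in>DD m. {u, v} \<in> ET \<union> cycle_edges c n"
    unfolding DD_def using X_ET carc_cyc by blast
next
  fix u v assume e: "{u, v} \<in> ET \<union> cycle_edges c n"
  let ?X = "TA \<union> LU \<union> {(w, c 0)}"
  show "(u, v) \<in> DD m \<longleftrightarrow> (v, u) \<notin> DD m"
  proof (cases "{u, v} \<in> ET")
    case True
    have e2: "{v, u} \<in> ET" using True by (simp add: insert_commute)
    have nc: "(u, v) \<notin> carc m c n" "(v, u) \<notin> carc m c n"
      using carc_cyc cyc_notin_ET True e2 by blast+
    have uv: "u \<noteq> v" using edge_in[OF True] by simp
    have "(u, v) \<in> ?X \<longleftrightarrow> (v, u) \<notin> ?X"
    proof (cases "u \<in> Lv")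
      case True
      have vL: "v \<notin> Lv" using leaf_nbr_inner[OF True] \<open>{u, v} \<in> ET\<close> by blast
      have "(u, v) \<in> ?X \<longleftrightarrow> u \<noteq> c 0"
        unfolding TA_def LU_def using True vL \<open>{u, v} \<in> ET\<close> wI by auto
      moreover have "(v, u) \<in> ?X \<longleftrightarrow> u = c 0"
        unfolding TA_def LU_def using True vL c0_nbr \<open>{u, v} \<in> ET\<close> by auto
      ultimately show ?thesis by blast
    next
      case False
      show ?thesis
      proof (cases "v \<in> Lv")
        case True
        have "(v, u) \<in> ?X \<longleftrightarrow> v \<noteq> c 0"
          unfolding TA_def LU_def using True False e2 wI by auto
        moreover have "(u, v) \<in> ?X \<longleftrightarrow> v = c 0"
          unfolding TA_def LU_def using True False c0_nbr e2 by auto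
        ultimately show ?thesis by blast
      next
        case vF: False
        have "dd u \<noteq> dd v" using tree_no_tie[OF tree rV \<open>{u, v} \<in> ET\<close>] .
        moreover have "(u, v) \<in> ?X \<longleftrightarrow> dd v < dd u"
          unfolding TA_def LU_def using False vF \<open>{u, v} \<in> ET\<close> cL n3 by auto
        moreover have "(v, u) \<in> ?X \<longleftrightarrow> dd u < dd v"
          unfolding TA_def LU_def using False vF e2 cL n3 by auto
        ultimately show ?thesis by auto
      qed
    qed
    thus ?thesis unfolding DD_def using nc by blast
  next
    case False
    hence cy: "{u, v} \<in> cycle_edges c n" using e by blast
    have nX: "(u, v) \<notin> ?X" "(v, u) \<notin> ?X"
      using X_ET False by (blast, metis insert_commute)
    obtain i where i: "i < n" "{u, v} = {c i, c (Suc i mod n)}" using cyc_edge_leaves[OF cy] by blast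
    have i': "Suc i mod n < n" using n3 by simp
    have ex: "(c i, c (Suc i mod n)) \<in> carc m c n \<longleftrightarrow> (c (Suc i mod n), c i) \<notin> carc m c n"
      using carc_iff[OF i(1) i'] carc_iff[OF i' i(1)] cdir_excl[OF i(1) n3, of m] by blast
    have "(u, v) \<in> carc m c n \<longleftrightarrow> (v, u) \<notin> carc m c n"
      using i(2) ex by (auto simp: doubleton_eq_iff)
    thus ?thesis unfolding DD_def using nX by blast
  qed
qed

end

context cfg
begin

lemma parent_card:
  assumes "v \<in> V"
  shows "card {x. {v, x} \<in> ET \<and> dd x < dd v} \<le> 1"
proof -
  let ?P = "{x. {v, x} \<in> ET \<and> dd x < dd v}"
  have P1: "\<And>x. x \<in> ?P \<Longrightarrow> {x, v} \<in> ET \<and> dd x + 1 = dd v"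
  proof -
    fix x assume x: "x \<in> ?P"
    hence e: "{x, v} \<in> ET" by (simp add: insert_commute)
    have "dd v \<le> dd x + 1" using dist_edge[OF s cn rV e] .
    thus "{x, v} \<in> ET \<and> dd x + 1 = dd v" using x e by simp
  qed
  have fin: "finite ?P"
  proof -
    have "?P \<subseteq> V" using edge_in by auto
    thus ?thesis using finV finite_subset by blast
  qed
  have "\<forall>x\<in>?P. \<forall>y\<in>?P. x = y"
  proof (intro ballI)
    fix x y assume "x \<in> ?P" "y \<in> ?P"
    from P1[OF this(1)] P1[OF this(2)] show "x = y"
      using tree_unique_parent[OF tree rV] by blast
  qed
  thus ?thesis using card_le_Suc0_iff_eq[OF fin] by simp
qed

lemma cdir_out_card: "i < n \<Longrightarrow> card {j. j < n \<and> cdir m n i j} \<le> (if m \<or> i \<noteq> 0 then 1 else 2)"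
proof -
  assume i: "i < n"
  show ?thesis
  proof (cases m)
    case True
    hence "{j. j < n \<and> cdir m n i j} \<subseteq> {Suc i mod n}" unfolding cdir_def by auto
    hence "card {j. j < n \<and> cdir m n i j} \<le> card {Suc i mod n}" by (intro card_mono) auto
    thus ?thesis using True by simp
  next
    case False
    show ?thesis
    proof (cases "i = 0")
      case True
      hence "{j. j < n \<and> cdir m n i j} \<subseteq> {1, n - 1}" using False unfolding cdir_def by auto
      hence "card {j. j < n \<and> cdir m n i j} \<le> card {1::nat, n - 1}" by (intro card_mono) auto
      also have "\<dots> \<le> 2" by (simp add: card_insert_if)
      finally show ?thesis using True False by simp
    next
      case nz: False
      hence "{j. j < n \<and> cdir m n i j} \<subseteq> {Suc i}" using False unfolding cdir_def by auto
      hence "card {j. j < n \<and> cdir m n i j} \<le> card {Suc i}" by (intro card_mono) auto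
      thus ?thesis using nz by simp
    qed
  qed
qed

lemma carc_out_card: "i < n \<Longrightarrow> card {y. (c i, y) \<in> carc m c n} \<le> (if m \<or> i \<noteq> 0 then 1 else 2)"
proof -
  assume i: "i < n"
  have "{y. (c i, y) \<in> carc m c n} = c ` {j. j < n \<and> cdir m n i j}"
  proof (intro set_eqI iffI)
    fix y assume "y \<in> {y. (c i, y) \<in> carc m c n}"
    then obtain i' j where ij: "i' < n" "j < n" "cdir m n i' j" "c i = c i'" "y = c j"
      unfolding carc_def by blast
    hence "i' = i" using ceq i by simp
    thus "y \<in> c ` {j. j < n \<and> cdir m n i j}" using ij by blast
  next
    fix y assume "y \<in> c ` {j. j < n \<and> cdir m n i j}"
    then obtain j where "j < n" "cdir m n i j" "y = c j" by blast
    thus "y \<in> {y. (c i, y) \<in> carc m c n}" using carc_iff i by blast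
  qed
  hence "card {y. (c i, y) \<in> carc m c n} \<le> card {j. j < n \<and> cdir m n i j}"
    by (simp add: card_image_le)
  thus ?thesis using cdir_out_card[OF i, of m] by linarith
qed

lemma cV: "i < n \<Longrightarrow> c i \<in> V" using cL LvV by blast

lemma DD_sub: "DD m \<subseteq> V \<times> V"
proof
  fix a assume a: "a \<in> DD m"
  obtain x y where xy: "a = (x, y)" by (cases a)
  show "a \<in> V \<times> V"
  proof (cases "(x, y) \<in> carc m c n")
    case True
    then obtain i j where "i < n" "j < n" "x = c i" "y = c j" unfolding carc_def by blast
    thus ?thesis using xy cV by simp
  next
    case False
    hence "(x, y) \<in> TA \<union> LU \<union> {(w, c 0)}" using a xy unfolding DD_def by blast
    hence "{x, y} \<in> ET" by (rule X_ET)
    thus ?thesis using xy edge_in by simp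
  qed
qed

lemma finDD: "finite (DD m)"
  using DD_sub finite_subset finV by (metis finite_SigmaI)

lemma fin_out: "finite {y. (v, y) \<in> DD m}"
proof -
  have "{y. (v, y) \<in> DD m} \<subseteq> snd ` DD m" by force
  thus ?thesis using finDD finite_subset by blast
qed

lemma outdeg_le: "v \<in> V \<Longrightarrow> outdeg (DD m) v \<le> 2"
proof -
  assume vV: "v \<in> V"
  let ?O = "{y. (v, y) \<in> DD m}"
  show ?thesis
  proof (cases "v \<in> Lv")
    case False
    have "?O \<subseteq> {x. {v, x} \<in> ET \<and> dd x < dd v} \<union> {c 0}"
    proof
      fix y assume "y \<in> ?O"
      hence "(v, y) \<in> DD m" by simp
      moreover have "(v, y) \<notin> LU" unfolding LU_def using False by auto
      moreover have "(v, y) \<notin> carc m c n" using False cL unfolding carc_def by auto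
      ultimately have "(v, y) \<in> TA \<or> (v, y) = (w, c 0)" unfolding DD_def by blast
      thus "y \<in> {x. {v, x} \<in> ET \<and> dd x < dd v} \<union> {c 0}" unfolding TA_def by auto
    qed
    moreover have "finite ({x. {v, x} \<in> ET \<and> dd x < dd v} \<union> {c 0})"
    proof -
      have "{x. {v, x} \<in> ET \<and> dd x < dd v} \<subseteq> V" using edge_in by blast
      thus ?thesis using finV finite_subset by blast
    qed
    ultimately have "card ?O \<le> card ({x. {v, x} \<in> ET \<and> dd x < dd v} \<union> {c 0})"
      by (intro card_mono)
    also have "\<dots> \<le> card {x. {v, x} \<in> ET \<and> dd x < dd v} + card {c 0}" by (rule card_Un_le)
    also have "\<dots> \<le> 2" using parent_card[OF vV] by simp
    finally show ?thesis unfolding outdeg_def .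
  next
    case True
    then obtain i where i: "i < n" "v = c i" using Lc by blast
    show ?thesis
    proof (cases "i = 0")
      case True
      have "?O \<subseteq> {y. (c i, y) \<in> carc m c n}"
      proof
        fix y assume "y \<in> ?O"
        hence "(v, y) \<in> DD m" by simp
        moreover have "(v, y) \<notin> LU" unfolding LU_def using True i by auto
        moreover have "(v, y) \<notin> TA" unfolding TA_def using \<open>v \<in> Lv\<close> by auto
        moreover have "v \<noteq> w" using \<open>v \<in> Lv\<close> wI by auto
        ultimately show "y \<in> {y. (c i, y) \<in> carc m c n}" unfolding DD_def using i by auto
      qed
      moreover have "finite {y. (c i, y) \<in> carc m c n}"
        using fin_out[of "c i" m] unfolding DD_def by (rule finite_subset[rotated]) blast
      ultimately have "card ?O \<le> card {y. (c i, y) \<in> carc m c n}"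
        by (intro card_mono)
      also have "\<dots> \<le> 2" using carc_out_card[OF i(1), of m] by (simp split: if_splits)
      finally show ?thesis unfolding outdeg_def .
    next
      case False
      have "?O \<subseteq> {x. {v, x} \<in> ET} \<union> {y. (c i, y) \<in> carc m c n}"
      proof
        fix y assume "y \<in> ?O"
        hence "(v, y) \<in> DD m" by simp
        moreover have "(v, y) \<notin> TA" unfolding TA_def using \<open>v \<in> Lv\<close> by auto
        moreover have "v \<noteq> w" using \<open>v \<in> Lv\<close> wI by auto
        ultimately show "y \<in> {x. {v, x} \<in> ET} \<union> {y. (c i, y) \<in> carc m c n}"
          unfolding DD_def LU_def using i by auto
      qed
      moreover have "finite ({x. {v, x} \<in> ET} \<union> {y. (c i, y) \<in> carc m c n})"
      proof -
        have "{x. {v, x} \<in> ET} \<subseteq> V" using edge_in by blast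
        hence "finite {x. {v, x} \<in> ET}" using finV finite_subset by blast
        moreover have "finite {y. (c i, y) \<in> carc m c n}"
          using fin_out[of "c i" m] unfolding DD_def by (rule finite_subset[rotated]) blast
        ultimately show ?thesis by simp
      qed
      ultimately have "card ?O \<le> card ({x. {v, x} \<in> ET} \<union> {y. (c i, y) \<in> carc m c n})"
        by (intro card_mono)
      also have "\<dots> \<le> card {x. {v, x} \<in> ET} + card {y. (c i, y) \<in> carc m c n}" by (rule card_Un_le)
      also have "card {x. {v, x} \<in> ET} = 1"
      proof -
        have "{x. {v, x} \<in> ET} = nbrs ET v" unfolding nbrs_def by (simp add: insert_commute)
        thus ?thesis using \<open>v \<in> Lv\<close> unfolding leaves_def deg_def by simp
      qed
      finally show ?thesis using carc_out_card[OF i(1), of m] False unfolding outdeg_def by simp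
    qed
  qed
qed

end

context cfg
begin

definition rho :: "'a \<Rightarrow> real" where
  "rho v = (if v \<notin> Lv \<and> v \<noteq> w then - 1 / (real (dd v) + 1) else 0)"

lemma rho_le0: "rho v \<le> 0" unfolding rho_def by simp
lemma rho_neg: "v \<notin> Lv \<Longrightarrow> v \<noteq> w \<Longrightarrow> rho v < 0" unfolding rho_def by simp

lemma rho_TA:
  assumes "(u, v) \<in> TA"
  shows "rho v < rho u"
proof -
  have a: "{u, v} \<in> ET" "u \<notin> Lv" "v \<notin> Lv" "dd v < dd u" using assms unfolding TA_def by auto
  have uV: "u \<in> V" using edge_in a(1) by simp
  have vw: "v \<noteq> w"
  proof
    assume "v = w"
    hence "dd w < dd u" using a by simp
    thus False using wmax[OF uV a(2)] by simp
  qed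
  show ?thesis
  proof (cases "u = w")
    case True
    thus ?thesis using rho_neg[OF a(3) vw] unfolding rho_def by simp
  next
    case False
    have "1 / (real (dd u) + 1) < 1 / (real (dd v) + 1)"
      using a(4) by (intro divide_strict_left_mono) auto
    thus ?thesis unfolding rho_def using a(2,3) False vw by simp
  qed
qed

lemma rho_mono: "(u, v) \<in> DD m \<Longrightarrow> rho v \<le> rho u"
proof -
  assume a: "(u, v) \<in> DD m"
  show "rho v \<le> rho u"
  proof (cases "(u, v) \<in> TA")
    case True thus ?thesis using rho_TA by fastforce
  next
    case False
    hence "(u, v) \<in> LU \<or> (u, v) = (w, c 0) \<or> (u, v) \<in> carc m c n" using a unfolding DD_def by blast
    moreover have "(u, v) \<in> LU \<Longrightarrow> rho u = 0" unfolding LU_def rho_def by auto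
    moreover have "(u, v) = (w, c 0) \<Longrightarrow> rho u = 0" unfolding rho_def by auto
    moreover have "(u, v) \<in> carc m c n \<Longrightarrow> rho u = 0"
      unfolding rho_def carc_def using cL by auto
    ultimately show ?thesis using rho_le0[of v] by auto
  qed
qed

lemma eul_core:
  assumes "eulerian_sub (DD m) A"
  shows "A \<subseteq> core m c n w JJ"
proof
  have sub: "A \<subseteq> DD m" and eul: "\<And>v. indeg A v = outdeg A v"
    using assms unfolding eulerian_sub_def by auto
  have finA: "finite A" using finDD sub finite_subset by blast
  have eq: "\<And>u v. (u, v) \<in> A \<Longrightarrow> rho u = rho v"
    using potential[OF finA eul] rho_mono sub by blast
  fix a assume aA: "a \<in> A"
  obtain x y where xy: "a = (x, y)" by (cases a)
  have xyA: "(x, y) \<in> A" using aA xy by simp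
  have nTA: "(x, y) \<notin> TA" using rho_TA eq[OF xyA] by fastforce
  show "a \<in> core m c n w JJ"
  proof (cases "(x, y) \<in> LU")
    case True
    hence l: "{x, y} \<in> ET" "x \<in> Lv" "x \<noteq> c 0" unfolding LU_def by auto
    have yL: "y \<notin> Lv" using leaf_nbr_inner[OF l(2) l(1)] .
    have "rho x = 0" unfolding rho_def using l by simp
    hence "rho y = 0" using eq[OF xyA] by simp
    hence yw: "y = w" using rho_neg[OF yL] by force
    obtain j where j: "j < n" "x = c j" using Lc[OF l(2)] by blast
    have "j \<noteq> 0"
    proof
      assume "j = 0" thus False using j l by simp
    qed
    hence "0 < j" by simp
    hence "j \<in> JJ" unfolding JJ_def using j l yw by simp
    thus ?thesis unfolding core_def using xy j yw by blast
  next
    case False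
    hence "(x, y) = (w, c 0) \<or> (x, y) \<in> carc m c n" using xyA sub nTA unfolding DD_def by blast
    thus ?thesis unfolding core_def using xy by blast
  qed
qed

lemma core_DD: "core m c n w JJ \<subseteq> DD m"
proof
  fix a assume "a \<in> core m c n w JJ"
  hence "a \<in> carc m c n \<or> a = (w, c 0) \<or> (\<exists>j\<in>JJ. a = (c j, w))" unfolding core_def by blast
  thus "a \<in> DD m"
  proof (elim disjE)
    assume "\<exists>j\<in>JJ. a = (c j, w)"
    then obtain j where j: "j \<in> JJ" "a = (c j, w)" by blast
    have "0 < j" "j < n" "{c j, w} \<in> ET" using j unfolding JJ_def by auto
    moreover have "c j \<noteq> c 0" using calculation ceq by simp
    ultimately have "a \<in> LU" unfolding LU_def using j cL by auto
    thus ?thesis unfolding DD_def by blast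
  qed (auto simp: DD_def)
qed

lemma eul_set:
  "{A. eulerian_sub (DD m) A} = insert {} (zcyc c w ` JJ \<union> (if m then {carc True c n} else {}))"
proof (intro set_eqI iffI)
  fix A assume "A \<in> {A. eulerian_sub (DD m) A}"
  hence e: "eulerian_sub (DD m) A" by simp
  have "A \<subseteq> core m c n w JJ" using eul_core[OF e] .
  moreover have "\<And>v. indeg A v = outdeg A v" using e unfolding eulerian_sub_def by simp
  ultimately have "A = {} \<or> (m \<and> A = carc True c n) \<or> (\<exists>j\<in>JJ. A = zcyc c w j)"
    using coreloc.core_char[OF coreloc] by blast
  thus "A \<in> insert {} (zcyc c w ` JJ \<union> (if m then {carc True c n} else {}))" by auto
next
  fix A assume "A \<in> insert {} (zcyc c w ` JJ \<union> (if m then {carc True c n} else {}))"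
  hence "A = {} \<or> (\<exists>j\<in>JJ. A = zcyc c w j) \<or> (m \<and> A = carc True c n)" by (auto split: if_splits)
  thus "A \<in> {A. eulerian_sub (DD m) A}"
  proof (elim disjE)
    assume "A = {}"
    thus ?thesis unfolding eulerian_sub_def indeg_def outdeg_def by simp
  next
    assume "\<exists>j\<in>JJ. A = zcyc c w j"
    then obtain j where j: "j \<in> JJ" "A = zcyc c w j" by blast
    have "A \<subseteq> DD m" using coreloc.zcyc_core[OF coreloc j(1)] core_DD j by blast
    moreover have "\<And>v. indeg A v = outdeg A v"
      using coreloc.zcyc_eul[OF coreloc] coreloc.Jn[OF coreloc j(1)] j by blast
    ultimately show ?thesis unfolding eulerian_sub_def by simp
  next
    assume a: "m \<and> A = carc True c n"
    have "A \<subseteq> DD m" using a unfolding DD_def by auto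
    moreover have "\<And>v. indeg A v = outdeg A v"
      using coreloc.carc1_eul[OF coreloc] a by blast
    ultimately show ?thesis unfolding eulerian_sub_def by simp
  qed
qed

definition "Lw = {b \<in> Lv. {b, w} \<in> ET}"

lemma card_JJ: "card JJ + 1 = card Lw"
proof -
  define K where "K = {j. j < n \<and> {c j, w} \<in> ET}"
  have "bij_betw c K Lw"
  proof -
    have "inj_on c K" using cinj unfolding K_def by (rule inj_on_subset) auto
    moreover have "c ` K = Lw"
    proof (intro set_eqI iffI)
      fix b assume "b \<in> c ` K" thus "b \<in> Lw" unfolding K_def Lw_def using cL by auto
    next
      fix b assume "b \<in> Lw"
      then obtain j where "j < n" "b = c j" "{c j, w} \<in> ET" using Lc unfolding Lw_def by blast
      thus "b \<in> c ` K" unfolding K_def by blast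
    qed
    ultimately show ?thesis unfolding bij_betw_def by simp
  qed
  hence "card K = card Lw" by (rule bij_betw_same_card)
  moreover have "JJ = K - {0}" unfolding JJ_def K_def by auto
  moreover have "0 \<in> K" unfolding K_def using c0w n3 by simp
  moreover have "finite K" unfolding K_def by simp
  moreover have "card K > 0" using calculation card_gt_0_iff by blast
  ultimately show ?thesis by (simp add: card_Diff_singleton)
qed

lemma card_eul: "card {A. eulerian_sub (DD m) A} = card Lw + (if m then 1 else 0)"
proof -
  have finJ: "finite JJ" using JJb finite_subset[of JJ "{..<n}"] by fastforce
  have ci: "card (zcyc c w ` JJ) = card JJ"
    using coreloc.zcyc_inj[OF coreloc] by (intro card_image) (meson inj_onI)
  have nz: "{} \<notin> zcyc c w ` JJ \<union> (if m then {carc True c n} else {})"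
    using coreloc.zcyc_ne[OF coreloc] coreloc.carc_ne[OF coreloc] by auto
  have dj: "zcyc c w ` JJ \<inter> (if m then {carc True c n} else {}) = {}"
    using coreloc.zcyc_not_carc[OF coreloc] by auto
  have "card {A. eulerian_sub (DD m) A} = Suc (card (zcyc c w ` JJ \<union> (if m then {carc True c n} else {})))"
    unfolding eul_set using nz finJ by simp
  also have "card (zcyc c w ` JJ \<union> (if m then {carc True c n} else {})) = card JJ + (if m then 1 else 0)"
    using card_Un_disjoint[OF _ _ dj] finJ ci by simp
  finally show ?thesis using card_JJ by simp
qed

lemma main_cfg:
  "\<exists>D. orientation V (ET \<union> cycle_edges c n) D \<and> (\<forall>v\<in>V. outdeg D v + 1 \<le> 3) \<and>
       num_even_eulerian D \<noteq> num_odd_eulerian D"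
proof -
  define m where "m = even (card Lw)"
  let ?D = "DD m"
  let ?S = "{A. eulerian_sub ?D A}"
  have oddS: "odd (card ?S)" unfolding card_eul m_def by simp
  have finS: "finite ?S"
  proof -
    have "?S \<subseteq> Pow ?D" unfolding eulerian_sub_def by blast
    thus ?thesis using finDD finite_subset by blast
  qed
  have "?S = {A. eulerian_sub ?D A \<and> even (card A)} \<union> {A. eulerian_sub ?D A \<and> odd (card A)}" by blast
  moreover have "{A. eulerian_sub ?D A \<and> even (card A)} \<inter> {A. eulerian_sub ?D A \<and> odd (card A)} = {}" by blast
  ultimately have "card ?S = num_even_eulerian ?D + num_odd_eulerian ?D"
    unfolding num_even_eulerian_def num_odd_eulerian_def using finS
    by (metis (no_types, lifting) card_Un_disjoint finite_Un)
  hence "num_even_eulerian ?D \<noteq> num_odd_eulerian ?D" using oddS by auto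
  moreover have "\<forall>v\<in>V. outdeg ?D v + 1 \<le> 3" using outdeg_le by fastforce
  ultimately show ?thesis using orient by blast
qed

end

lemma suc2_mod_ne: "i < n \<Longrightarrow> 3 \<le> n \<Longrightarrow> Suc (Suc i mod n) mod n \<noteq> i"
proof (cases "Suc i < n")
  case True
  assume "3 \<le> n"
  hence s: "Suc i mod n = Suc i" using True by simp
  show ?thesis
  proof (cases "Suc (Suc i) < n")
    case True thus ?thesis using s by simp
  next
    case False
    hence "Suc (Suc i) = n" using \<open>Suc i < n\<close> by simp
    thus ?thesis using s \<open>3 \<le> n\<close> by simp
  qed
next
  case False
  assume a: "i < n" "3 \<le> n"
  hence "Suc i = n" using False by simp
  thus ?thesis using a by simp
qed

context cfg
begin

lemma card_cyc: "card (cycle_edges c n) = n"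
proof -
  let ?f = "\<lambda>i. {c i, c (Suc i mod n)}"
  have "cycle_edges c n = ?f ` {..<n}" unfolding cycle_edges_def by blast
  moreover have "inj_on ?f {..<n}"
  proof (rule inj_onI)
    fix i j assume ij: "i \<in> {..<n}" "j \<in> {..<n}" "?f i = ?f j"
    have i': "Suc i mod n < n" "Suc j mod n < n" using n3 by simp_all
    from ij(3) have "(c i = c j \<and> c (Suc i mod n) = c (Suc j mod n)) \<or>
                     (c i = c (Suc j mod n) \<and> c (Suc i mod n) = c j)"
      by (simp add: doubleton_eq_iff)
    thus "i = j"
    proof
      assume "c i = c j \<and> c (Suc i mod n) = c (Suc j mod n)"
      thus ?thesis using ceq ij by simp
    next
      assume "c i = c (Suc j mod n) \<and> c (Suc i mod n) = c j"
      hence "i = Suc j mod n" "Suc i mod n = j" using ceq ij i' by auto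
      hence "Suc (Suc i mod n) mod n = i" by simp
      thus ?thesis using suc2_mod_ne ij n3 by simp
    qed
  qed
  ultimately show ?thesis by (simp add: card_image)
qed

lemma cyc_sub: "e \<in> cycle_edges c n \<Longrightarrow> \<exists>u v. e = {u, v} \<and> u \<in> V \<and> v \<in> V"
proof -
  assume "e \<in> cycle_edges c n"
  then obtain i where i: "i < n" "e = {c i, c (Suc i mod n)}" using cyc_edge_leaves by blast
  have "Suc i mod n < n" using n3 by simp
  thus ?thesis using i cV by blast
qed

lemma no_low:
  assumes o: "orientation V (ET \<union> cycle_edges c n) D" and le: "\<forall>v\<in>V. outdeg D v \<le> 1"
  shows False
proof -
  let ?E = "ET \<union> cycle_edges c n"
  have o1: "\<And>u v. (u, v) \<in> D \<Longrightarrow> {u, v} \<in> ?E" using o unfolding orientation_def by blast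
  have o2: "\<And>u v. {u, v} \<in> ?E \<Longrightarrow> (u, v) \<in> D \<longleftrightarrow> (v, u) \<notin> D" using o unfolding orientation_def by blast
  have eV: "\<And>e. e \<in> ?E \<Longrightarrow> \<exists>u v. e = {u, v} \<and> u \<in> V \<and> v \<in> V"
  proof -
    fix e assume "e \<in> ?E"
    thus "\<exists>u v. e = {u, v} \<and> u \<in> V \<and> v \<in> V"
    proof
      assume "e \<in> ET" thus ?thesis using s unfolding simple_graph_def by blast
    qed (rule cyc_sub)
  qed
  have DV: "D \<subseteq> V \<times> V"
  proof
    fix a assume "a \<in> D"
    obtain x y where xy: "a = (x, y)" by (cases a)
    have "{x, y} \<in> ?E" using o1 \<open>a \<in> D\<close> xy by simp
    then obtain u v where "{x, y} = {u, v}" "u \<in> V" "v \<in> V" using eV by blast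
    thus "a \<in> V \<times> V" using xy by (auto simp: doubleton_eq_iff)
  qed
  have finD: "finite D" using finite_subset[OF DV] finite_cartesian_product[OF finV finV] by blast
  have fB: "\<forall>v\<in>V. finite {x. (v, x) \<in> D}"
  proof
    fix v have "{x. (v, x) \<in> D} \<subseteq> snd ` D" by force
    thus "finite {x. (v, x) \<in> D}" using finD finite_subset by blast
  qed
  have "D = Sigma V (\<lambda>v. {x. (v, x) \<in> D})" using DV by auto
  hence "card D = card (Sigma V (\<lambda>v. {x. (v, x) \<in> D}))" by simp
  also have "\<dots> = (\<Sum>v\<in>V. card {x. (v, x) \<in> D})" using card_SigmaI[OF finV fB] .
  finally have "card D = (\<Sum>v\<in>V. card {x. (v, x) \<in> D})" .
  also have "\<dots> \<le> (\<Sum>v\<in>V. 1)" using le unfolding outdeg_def by (intro sum_mono) auto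
  finally have cD: "card D \<le> card V" by simp
  have "(\<lambda>(u, v). {u, v}) ` D = ?E"
  proof (intro set_eqI iffI)
    fix e assume "e \<in> (\<lambda>(u, v). {u, v}) ` D"
    thus "e \<in> ?E" using o1 by auto
  next
    fix e assume e: "e \<in> ?E"
    then obtain u v where uv: "e = {u, v}" using eV by blast
    have "(u, v) \<in> D \<or> (v, u) \<in> D" using o2 e uv by blast
    thus "e \<in> (\<lambda>(u, v). {u, v}) ` D"
    proof
      assume "(u, v) \<in> D" thus ?thesis using uv by force
    next
      assume "(v, u) \<in> D"
      moreover have "e = (\<lambda>(u, v). {u, v}) (v, u)" using uv by (simp add: insert_commute)
      ultimately show ?thesis by blast
    qed
  qed
  moreover have "inj_on (\<lambda>(u, v). {u, v}) D"
  proof (rule inj_onI)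
    fix a b assume ab: "a \<in> D" "b \<in> D" "(\<lambda>(u, v). {u, v}) a = (\<lambda>(u, v). {u, v}) b"
    obtain x y where xy: "a = (x, y)" by (cases a)
    obtain x' y' where xy': "b = (x', y')" by (cases b)
    have "{x, y} = {x', y'}" using ab xy xy' by simp
    hence "(x = x' \<and> y = y') \<or> (x = y' \<and> y = x')" by (simp add: doubleton_eq_iff)
    thus "a = b"
    proof
      assume "x = y' \<and> y = x'"
      hence "(y, x) \<in> D" using ab xy' by simp
      moreover have "{x, y} \<in> ?E" using o1[of x y] ab(1) xy by simp
      ultimately have "(x, y) \<notin> D" using o2 by blast
      thus ?thesis using ab xy by simp
    qed (use xy xy' in simp)
  qed
  ultimately have "card ?E = card D" using card_image by fastforce
  moreover have "card ?E = card ET + card (cycle_edges c n)"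
  proof -
    have "ET \<inter> cycle_edges c n = {}" using cyc_notin_ET by blast
    moreover have "finite ET" using simple_finite_E[OF s] .
    moreover have "finite (cycle_edges c n)" unfolding cycle_edges_def by simp
    ultimately show ?thesis by (simp add: card_Un_disjoint)
  qed
  moreover have "card ET = card V - 1" using tree unfolding is_tree_def by simp
  moreover have "card V \<ge> 1"
  proof -
    have "card V > 0" using finV wV card_gt_0_iff by blast
    thus ?thesis by simp
  qed
  ultimately show False using cD card_cyc n3 by simp
qed

lemma AT3: "AT V (ET \<union> cycle_edges c n) = 3"
  unfolding AT_def
proof (rule Least_equality)
  show "\<exists>D. orientation V (ET \<union> cycle_edges c n) D \<and> (\<forall>v\<in>V. outdeg D v + 1 \<le> 3) \<and>
       num_even_eulerian D \<noteq> num_odd_eulerian D" by (rule main_cfg)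
next
  fix k assume "\<exists>D. orientation V (ET \<union> cycle_edges c n) D \<and> (\<forall>v\<in>V. outdeg D v + 1 \<le> k) \<and>
       num_even_eulerian D \<noteq> num_odd_eulerian D"
  then obtain D where D: "orientation V (ET \<union> cycle_edges c n) D" "\<forall>v\<in>V. outdeg D v + 1 \<le> k" by blast
  show "3 \<le> k"
  proof (rule ccontr)
    assume "\<not> 3 \<le> k"
    hence "\<forall>v\<in>V. outdeg D v \<le> 1" using D(2) by fastforce
    thus False using no_low[OF D(1)] by blast
  qed
qed

end

lemma parent_card_gen:
  assumes t: "is_tree V E" and r: "r \<in> V" and v: "v \<in> V"
  shows "card {x. {v, x} \<in> E \<and> gdist E r x < gdist E r v} \<le> 1"
proof -
  have s: "simple_graph V E" and cn: "graph_connected V E" using t unfolding is_tree_def by auto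
  let ?P = "{x. {v, x} \<in> E \<and> gdist E r x < gdist E r v}"
  have P1: "\<And>x. x \<in> ?P \<Longrightarrow> {x, v} \<in> E \<and> gdist E r x + 1 = gdist E r v"
  proof -
    fix x assume x: "x \<in> ?P"
    hence e: "{x, v} \<in> E" by (simp add: insert_commute)
    have "gdist E r v \<le> gdist E r x + 1" using dist_edge[OF s cn r e] .
    thus "{x, v} \<in> E \<and> gdist E r x + 1 = gdist E r v" using x e by simp
  qed
  have fin: "finite ?P"
  proof -
    have "?P \<subseteq> V" using simple_edge_in[OF s] by blast
    thus ?thesis using s finite_subset unfolding simple_graph_def by blast
  qed
  have "\<forall>x\<in>?P. \<forall>y\<in>?P. x = y"
  proof (intro ballI)
    fix x y assume "x \<in> ?P" "y \<in> ?P"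
    from P1[OF this(1)] P1[OF this(2)] show "x = y"
      using tree_unique_parent[OF t r] by blast
  qed
  thus ?thesis using card_le_Suc0_iff_eq[OF fin] by simp
qed

lemma tleaf:
  assumes t: "is_tree V E" and nd2: "\<forall>v\<in>V. deg E v \<noteq> 2"
    and x0: "x0 \<in> V" and y: "y \<in> V" "y \<notin> leaves V E" "y \<noteq> x0"
    and ymax: "\<And>u. u \<in> V \<Longrightarrow> u \<notin> leaves V E \<Longrightarrow> gdist E x0 u \<le> gdist E x0 y"
  shows "2 \<le> card {b \<in> leaves V E. {b, y} \<in> E}"
proof -
  have s: "simple_graph V E" and cn: "graph_connected V E" using t unfolding is_tree_def by auto
  let ?N = "nbrs E y"
  have finN: "finite ?N" by (rule nbrs_finite[OF s])
  obtain u where u: "{u, y} \<in> E" using dist_parent[OF s cn x0 y(1) y(3)] by blast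
  have "u \<in> ?N" using u unfolding nbrs_def by simp
  hence "card ?N \<noteq> 0" using finN by auto
  moreover have "card ?N \<noteq> 1" using y unfolding leaves_def deg_def by simp
  moreover have "card ?N \<noteq> 2" using nd2 y unfolding deg_def by simp
  ultimately have c3: "card ?N \<ge> 3" by linarith
  have "?N - leaves V E \<subseteq> {x. {y, x} \<in> E \<and> gdist E x0 x < gdist E x0 y}"
  proof
    fix x assume x: "x \<in> ?N - leaves V E"
    hence e: "{x, y} \<in> E" unfolding nbrs_def by simp
    hence e': "{y, x} \<in> E" by (simp add: insert_commute)
    have "x \<in> V" using simple_edge_in[OF s e] by simp
    hence "gdist E x0 x \<le> gdist E x0 y" using ymax x by blast
    moreover have "gdist E x0 x \<noteq> gdist E x0 y" using tree_no_tie[OF t x0 e] .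
    ultimately show "x \<in> {x. {y, x} \<in> E \<and> gdist E x0 x < gdist E x0 y}" using e' by simp
  qed
  hence "card (?N - leaves V E) \<le> card {x. {y, x} \<in> E \<and> gdist E x0 x < gdist E x0 y}"
    using finN by (intro card_mono) (auto intro: finite_subset[OF _ nbrs_finite[OF s]] simp: nbrs_def insert_commute)
  also have "\<dots> \<le> 1" by (rule parent_card_gen[OF t x0 y(1)])
  finally have c1: "card (?N - leaves V E) \<le> 1" .
  have "?N = (?N \<inter> leaves V E) \<union> (?N - leaves V E)" by blast
  hence "card ?N \<le> card (?N \<inter> leaves V E) + card (?N - leaves V E)" by (metis card_Un_le)
  hence "card (?N \<inter> leaves V E) \<ge> 2" using c3 c1 by linarith
  moreover have "?N \<inter> leaves V E = {b \<in> leaves V E. {b, y} \<in> E}" unfolding nbrs_def by blast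
  ultimately show ?thesis by simp
qed

lemma ex_max_nat:
  fixes f :: "'a \<Rightarrow> nat"
  assumes "finite S" "S \<noteq> {}"
  shows "\<exists>y\<in>S. \<forall>u\<in>S. f u \<le> f y"
proof -
  have "Max (f ` S) \<in> f ` S" using assms by simp
  then obtain y where y: "y \<in> S" "f y = Max (f ` S)" by (metis imageE)
  have "\<forall>u\<in>S. f u \<le> f y" using y assms by simp
  thus ?thesis using y by blast
qed

lemma find_boundary:
  fixes P :: "nat \<Rightarrow> bool"
  assumes n: "0 < n" and i1: "i1 < n" "P i1" and j: "j < n" "\<not> P j"
  shows "\<exists>i0<n. P i0 \<and> \<not> P ((i0 + n - 1) mod n)"
proof -
  let ?Q = "\<lambda>d. P ((j + d) mod n)"
  have "(j + (i1 + n - j)) mod n = i1" using i1 j by simp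
  hence ex: "?Q (i1 + n - j)" using i1 by simp
  define d0 where "d0 = (LEAST d. ?Q d)"
  have q0: "?Q d0" unfolding d0_def using ex by (rule LeastI)
  have "d0 \<noteq> 0"
  proof
    assume "d0 = 0" thus False using q0 j by simp
  qed
  hence "\<not> ?Q (d0 - 1)" unfolding d0_def by (metis diff_less not_less_Least zero_less_one neq0_conv d0_def)
  define i0 where "i0 = (j + d0) mod n"
  have "i0 < n" unfolding i0_def using n by simp
  moreover have "P i0" using q0 unfolding i0_def .
  moreover have "(i0 + n - 1) mod n = (j + (d0 - 1)) mod n"
  proof -
    have "(i0 + n - 1) mod n = ((j + d0) mod n + (n - 1)) mod n" unfolding i0_def using n by simp
    also have "\<dots> = (j + d0 + (n - 1)) mod n" by (simp add: mod_add_left_eq)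
    also have "j + d0 + (n - 1) = (j + (d0 - 1)) + n" using \<open>d0 \<noteq> 0\<close> n by simp
    finally show ?thesis by simp
  qed
  ultimately show ?thesis using \<open>\<not> ?Q (d0 - 1)\<close> by metis
qed

lemma rot_image:
  fixes i0 n :: nat
  assumes "i0 < n"
  shows "(\<lambda>i. (i + i0) mod n) ` {..<n} = {..<n}"
proof (intro set_eqI iffI)
  fix k assume "k \<in> (\<lambda>i. (i + i0) mod n) ` {..<n}"
  then obtain i where "k = (i + i0) mod n" by blast
  moreover have "0 < n" using assms by simp
  ultimately show "k \<in> {..<n}" by simp
next
  fix k assume k: "k \<in> {..<n}"
  let ?i = "(k + n - i0) mod n"
  have "(?i + i0) mod n = (k + n - i0 + i0) mod n" by (simp add: mod_add_left_eq)
  also have "k + n - i0 + i0 = k + n" using assms by simp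
  finally have "(?i + i0) mod n = k" using k by simp
  moreover have "?i < n" using assms by simp
  ultimately show "k \<in> (\<lambda>i. (i + i0) mod n) ` {..<n}" by (metis imageI lessThan_iff)
qed

lemma rot_bij:
  fixes i0 n :: nat
  assumes "i0 < n"
  shows "bij_betw (\<lambda>i. (i + i0) mod n) {..<n} {..<n}"
proof -
  have im: "(\<lambda>i. (i + i0) mod n) ` {..<n} = {..<n}" by (rule rot_image[OF assms])
  have "inj_on (\<lambda>i. (i + i0) mod n) {..<n}" by (rule eq_card_imp_inj_on) (simp_all only: im finite_lessThan)
  thus ?thesis using im unfolding bij_betw_def by simp
qed

lemma rot_cycle:
  fixes i0 n :: nat
  assumes "i0 < n"
  shows "cycle_edges (\<lambda>i. c ((i + i0) mod n)) n = cycle_edges c n"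
proof -
  let ?f = "\<lambda>k. {c k, c (Suc k mod n)}"
  have "cycle_edges (\<lambda>i. c ((i + i0) mod n)) n = ?f ` ((\<lambda>i. (i + i0) mod n) ` {..<n})"
  proof -
    have "\<And>i. (Suc i mod n + i0) mod n = Suc ((i + i0) mod n) mod n"
      by (simp add: mod_add_left_eq mod_Suc_eq)
    hence "cycle_edges (\<lambda>i. c ((i + i0) mod n)) n = (\<lambda>i. ?f ((i + i0) mod n)) ` {..<n}"
      unfolding cycle_edges_def by auto
    thus ?thesis by (simp add: image_image)
  qed
  also have "\<dots> = ?f ` {..<n}" using rot_image[OF assms] by simp
  also have "\<dots> = cycle_edges c n" unfolding cycle_edges_def by blast
  finally show ?thesis .
qed

lemma exists_cfg:
  assumes h: "is_halin V ET c n" and nw: "\<not> is_wheel_halin V ET"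
  shows "\<exists>c' r w. cfg V ET c' n r w \<and> cycle_edges c' n = cycle_edges c n"
proof -
  have t: "is_tree V ET" and nd2: "\<forall>v\<in>V. deg ET v \<noteq> 2" and ex3: "\<exists>v\<in>V. 3 \<le> deg ET v"
    and bij: "bij_betw c {..<n} (leaves V ET)"
    using h unfolding is_halin_def by auto
  have s: "simple_graph V ET" and cn: "graph_connected V ET" using t unfolding is_tree_def by auto
  have finV: "finite V" using s unfolding simple_graph_def by simp
  let ?L = "leaves V ET"
  define I where "I = V - ?L"
  have finI: "finite I" unfolding I_def using finV by simp
  obtain r0 where r0V: "r0 \<in> V" and r0d: "3 \<le> deg ET r0" using ex3 by blast
  have r0I: "r0 \<in> I" unfolding I_def leaves_def using r0V r0d by simp
  have "card I \<noteq> 1" using nw unfolding is_wheel_halin_def inner_vertices_def I_def by simp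
  hence "I \<noteq> {r0}" by auto
  then obtain u0 where u0: "u0 \<in> I" "u0 \<noteq> r0" using r0I by blast
  obtain r where rI: "r \<in> I" and rmax: "\<forall>u\<in>I. gdist ET r0 u \<le> gdist ET r0 r"
    using ex_max_nat[OF finI] r0I by blast
  have IV: "\<And>x. x \<in> I \<Longrightarrow> x \<in> V \<and> x \<notin> ?L" unfolding I_def by simp
  have "gdist ET r0 u0 \<noteq> 0" using dist_zero_iff[OF cn r0V] IV[OF u0(1)] u0(2) by simp
  hence "gdist ET r0 r \<noteq> 0" using rmax u0(1) by fastforce
  hence rr0: "r \<noteq> r0" using dist_zero_iff[OF cn r0V r0V] by auto
  obtain w where wI: "w \<in> I" and wmax: "\<forall>u\<in>I. gdist ET r u \<le> gdist ET r w"
    using ex_max_nat[OF finI] r0I by blast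
  have rV: "r \<in> V" "r \<notin> ?L" using IV[OF rI] by auto
  have wV: "w \<in> V" "w \<notin> ?L" using IV[OF wI] by auto
  have "gdist ET r r0 \<noteq> 0" using dist_zero_iff[OF cn rV(1) r0V] rr0 by simp
  hence "gdist ET r w \<noteq> 0" using wmax r0I by fastforce
  hence wr: "w \<noteq> r" using dist_zero_iff[OF cn rV(1) rV(1)] by auto
  have Lr: "2 \<le> card {b \<in> ?L. {b, r} \<in> ET}"
  proof (rule tleaf[OF t nd2 r0V rV(1) rV(2) rr0])
    fix u assume "u \<in> V" "u \<notin> ?L"
    hence "u \<in> I" unfolding I_def by simp
    thus "gdist ET r0 u \<le> gdist ET r0 r" using rmax by blast
  qed
  have Lw: "2 \<le> card {b \<in> ?L. {b, w} \<in> ET}"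
  proof (rule tleaf[OF t nd2 rV(1) wV(1) wV(2) wr])
    fix u assume "u \<in> V" "u \<notin> ?L"
    hence "u \<in> I" unfolding I_def by simp
    thus "gdist ET r u \<le> gdist ET r w" using wmax by blast
  qed
  have "{b \<in> ?L. {b, r} \<in> ET} \<noteq> {}"
  proof
    assume "{b \<in> ?L. {b, r} \<in> ET} = {}"
    with Lr show False by simp
  qed
  then obtain b0 where b0: "b0 \<in> ?L" "{b0, r} \<in> ET" by blast
  define LW where "LW = {b \<in> ?L. {b, w} \<in> ET}"
  have b0LW: "b0 \<notin> LW"
  proof
    assume "b0 \<in> LW"
    hence "{b0, w} \<in> ET" unfolding LW_def by simp
    hence "w \<in> nbrs ET b0" "r \<in> nbrs ET b0" using b0 unfolding nbrs_def by (simp_all add: insert_commute)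
    hence "w = r" using leaf_nbrs[OF b0(1)] by blast
    thus False using wr by simp
  qed
  have finL: "finite ?L" using finV unfolding leaves_def by simp
  have cardL: "card ?L = n" using bij_betw_same_card[OF bij] by simp
  have "insert b0 LW \<subseteq> ?L" using b0 unfolding LW_def by auto
  hence "card (insert b0 LW) \<le> card ?L" using finL by (rule card_mono[rotated])
  moreover have "card (insert b0 LW) = card LW + 1"
    using b0LW finite_subset[of LW ?L] finL unfolding LW_def by (simp add: card_insert_if)
  ultimately have n3: "3 \<le> n" using Lw cardL unfolding LW_def by simp
  have "LW \<noteq> {}"
  proof
    assume "LW = {}"
    with Lw show False unfolding LW_def by simp
  qed
  then obtain b1 where b1: "b1 \<in> LW" by blast
  obtain i1 where i1: "i1 < n" "c i1 = b1" using bij b1 unfolding bij_betw_def LW_def by force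
  obtain j where j: "j < n" "c j = b0" using bij b0 unfolding bij_betw_def by force
  obtain i0 where i0: "i0 < n" "c i0 \<in> LW" "c ((i0 + n - 1) mod n) \<notin> LW"
    using find_boundary[of n i1 "\<lambda>i. c i \<in> LW" j] i1 j b1 b0LW n3 by auto
  define c' where "c' = (\<lambda>i. c ((i + i0) mod n))"
  have bij': "bij_betw c' {..<n} ?L"
  proof -
    have "bij_betw (c \<circ> (\<lambda>i. (i + i0) mod n)) {..<n} ?L" by (rule bij_betw_trans[OF rot_bij[OF i0(1)] bij])
    thus ?thesis unfolding c'_def comp_def .
  qed
  have c'0: "{c' 0, w} \<in> ET" using i0 unfolding c'_def LW_def by simp
  have "n - 1 + i0 = i0 + n - 1" using n3 by simp
  hence "c' (n - 1) = c ((i0 + n - 1) mod n)" unfolding c'_def by simp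
  moreover have "c ((i0 + n - 1) mod n) \<in> ?L" using bij n3 unfolding bij_betw_def by auto
  ultimately have c'n: "{c' (n - 1), w} \<notin> ET" using i0(3) unfolding LW_def by simp
  have wm: "\<And>u. u \<in> V \<Longrightarrow> u \<notin> ?L \<Longrightarrow> gdist ET r u \<le> gdist ET r w"
  proof -
    fix u assume "u \<in> V" "u \<notin> ?L"
    hence "u \<in> I" unfolding I_def by simp
    thus "gdist ET r u \<le> gdist ET r w" using wmax by blast
  qed
  have "cfg V ET c' n r w"
    by (rule cfg.intro[OF t bij' n3 rV(1) rV(2) wV(1) wV(2) wr wm c'0 c'n])
  moreover have "cycle_edges c' n = cycle_edges c n" unfolding c'_def by (rule rot_cycle[OF i0(1)])
  ultimately show ?thesis by blast
qed

theorem lemma3p6: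
  fixes V :: "'a set" and ET :: "'a set set" and c :: "nat \<Rightarrow> 'a" and n :: nat
  assumes "is_halin V ET c n"
    and "odd n"
    and "\<not> is_wheel_halin V ET"
  shows "AT V (ET \<union> cycle_edges c n) = 3"
proof -
  obtain c' r w where cf: "cfg V ET c' n r w" and ce: "cycle_edges c' n = cycle_edges c n"
    using exists_cfg[OF assms(1,3)] by blast
  have "AT V (ET \<union> cycle_edges c' n) = 3" by (rule cfg.AT3[OF cf])
  thus ?thesis using ce by simp
qed

end
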